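(* Let $p\geq1$ and let $u:\mathbb{R}\to\mathbb{R}$ be a function with compact support which is Lipschitz continuous and such that $u\in C^{1}(\mathbb{R}\setminus S)$ for some finite set $S\subseteq\mathbb{R}$. For $\delta>0$ let $S_{\delta}u(x):=\delta\lfloor u(x)/\delta\rfloor$. Then \[ \limsup_{\delta\to0^{+}}\Lambda_{\delta,p}(S_{\delta}u,\mathbb{R})\leq\frac{2}{p}C_{p}\int_{\mathbb{R}}|u'(x)|^{p}\,dx. \]
   Context: For $\delta>0$, $p\geq1$ and measurable $v:\mathbb{R}\to\mathbb{R}$, $\Lambda_{\delta,p}(v,\mathbb{R}):=\iint_{\{(x,y)\in\mathbb{R}^{2}:|v(y)-v(x)|>\delta\}}\frac{\delta^{p}}{|y-x|^{1+p}}\,dx\,dy$. $C_{p}:=\frac{1}{p-1}\left(1-\frac{1}{2^{p-1}}\right)$ if $p>1$ and $C_{1}:=\log2$. $\lfloor\cdot\rfloor$ is the integer part (floor). *)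

theory Defs
  imports "HOL-Analysis.Analysis"
begin

definition Lambda :: "real \<Rightarrow> real \<Rightarrow> (real \<Rightarrow> real) \<Rightarrow> ennreal" where
  "Lambda \<delta> p v =
     (\<integral>\<^sup>+ z. indicator {(x, y). \<bar>v y - v x\<bar> > \<delta>} z *
              ennreal (\<delta> powr p / \<bar>snd z - fst z\<bar> powr (1 + p)) \<partial>(lborel \<Otimes>\<^sub>M lborel))"

definition C_const :: "real \<Rightarrow> real" where
  "C_const p = (if p > 1 then (1 / (p - 1)) * (1 - 1 / 2 powr (p - 1)) else ln 2)"

definition S_floor :: "real \<Rightarrow> (real \<Rightarrow> real) \<Rightarrow> real \<Rightarrow> real" where
  "S_floor \<delta> u x = \<delta> * real_of_int \<lfloor>u x / \<delta>\<rfloor>"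

end

theory Submission
  imports Defs
begin
lemma tail_int_right:
  fixes x r p :: real assumes r: "r > 0" and p: "p > 0"
  shows "(\<integral>\<^sup>+y. indicator {x+r..} y * ennreal ((y-x) powr (-1-p)) \<partial>lborel) = ennreal (r powr (-p) / p)"
proof -
  have "(\<integral>\<^sup>+y. indicator {x+r..} y * ennreal ((y-x) powr (-1-p)) \<partial>lborel)
      = (\<integral>\<^sup>+y. ennreal (y powr (-1-p)) * indicator {r..} y \<partial>lborel)"
    by (subst nn_integral_real_affine[where c=1 and t=x]) (auto intro!: nn_integral_cong split: split_indicator simp: mult.commute)
  also have "\<dots> = ennreal (-(r powr (-1-p+1)) / (-1-p+1))"
    by (rule nn_integral_has_integral_lebesgue'[OF _ has_integral_powr_to_inf]) (use r p in auto)
  also have "-(r powr (-1-p+1)) / (-1-p+1) = r powr (-p) / p" using p by (simp add: field_simps)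
  finally show ?thesis .
qed

lemma tail_int_left:
  fixes x r p :: real assumes r: "r > 0" and p: "p > 0"
  shows "(\<integral>\<^sup>+y. indicator {..x-r} y * ennreal ((x-y) powr (-1-p)) \<partial>lborel) = ennreal (r powr (-p) / p)"
proof -
  have "(\<integral>\<^sup>+y. indicator {..x-r} y * ennreal ((x-y) powr (-1-p)) \<partial>lborel)
      = (\<integral>\<^sup>+y. ennreal (y powr (-1-p)) * indicator {r..} y \<partial>lborel)"
    by (subst nn_integral_real_affine[where c="-1" and t=x]) (auto intro!: nn_integral_cong split: split_indicator simp: mult.commute)
  also have "\<dots> = ennreal (-(r powr (-1-p+1)) / (-1-p+1))"
    by (rule nn_integral_has_integral_lebesgue'[OF _ has_integral_powr_to_inf]) (use r p in auto)
  also have "-(r powr (-1-p+1)) / (-1-p+1) = r powr (-p) / p" using p by (simp add: field_simps)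
  finally show ?thesis .
qed

lemma kern_right:
  fixes x r p \<delta> :: real assumes r: "r > 0" and p: "p > 0" and d: "\<delta> > 0" and A: "A \<subseteq> {x+r..}"
  shows "(\<integral>\<^sup>+y. indicator A y * ennreal (\<delta> powr p / \<bar>y-x\<bar> powr (1+p)) \<partial>lborel) \<le> ennreal (\<delta> powr p * (r powr (-p) / p))"
proof -
  have "(\<integral>\<^sup>+y. indicator A y * ennreal (\<delta> powr p / \<bar>y-x\<bar> powr (1+p)) \<partial>lborel)
     \<le> (\<integral>\<^sup>+y. ennreal (\<delta> powr p) * (indicator {x+r..} y * ennreal ((y-x) powr (-1-p))) \<partial>lborel)"
  proof (intro nn_integral_mono)
    fix y
    show "indicator A y * ennreal (\<delta> powr p / \<bar>y-x\<bar> powr (1+p)) \<le> ennreal (\<delta> powr p) * (indicator {x+r..} y * ennreal ((y-x) powr (-1-p)))"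
    proof (cases "y \<in> A")
      case True
      then have y: "y - x \<ge> r" using A by auto
      then have "\<bar>y-x\<bar> = y - x" using r by auto
      moreover have "\<delta> powr p / (y-x) powr (1+p) = \<delta> powr p * (y-x) powr (-1-p)"
        using powr_minus[of "y-x" "1+p"] by (simp add: divide_inverse)
      ultimately show ?thesis using True y by (simp add: ennreal_mult'[symmetric])
    qed simp
  qed
  also have "\<dots> = ennreal (\<delta> powr p) * (\<integral>\<^sup>+y. indicator {x+r..} y * ennreal ((y-x) powr (-1-p)) \<partial>lborel)"
    by (rule nn_integral_cmult) measurable
  also have "\<dots> = ennreal (\<delta> powr p) * ennreal (r powr (-p) / p)" using tail_int_right[OF r p] by simp
  also have "\<dots> = ennreal (\<delta> powr p * (r powr (-p) / p))" using p by (simp add: ennreal_mult[symmetric])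
  finally show ?thesis .
qed

lemma kern_left:
  fixes x r p \<delta> :: real assumes r: "r > 0" and p: "p > 0" and d: "\<delta> > 0" and A: "A \<subseteq> {..x-r}"
  shows "(\<integral>\<^sup>+y. indicator A y * ennreal (\<delta> powr p / \<bar>y-x\<bar> powr (1+p)) \<partial>lborel) \<le> ennreal (\<delta> powr p * (r powr (-p) / p))"
proof -
  have "(\<integral>\<^sup>+y. indicator A y * ennreal (\<delta> powr p / \<bar>y-x\<bar> powr (1+p)) \<partial>lborel)
     \<le> (\<integral>\<^sup>+y. ennreal (\<delta> powr p) * (indicator {..x-r} y * ennreal ((x-y) powr (-1-p))) \<partial>lborel)"
  proof (intro nn_integral_mono)
    fix y
    show "indicator A y * ennreal (\<delta> powr p / \<bar>y-x\<bar> powr (1+p)) \<le> ennreal (\<delta> powr p) * (indicator {..x-r} y * ennreal ((x-y) powr (-1-p)))"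
    proof (cases "y \<in> A")
      case True
      then have y: "x - y \<ge> r" using A by auto
      then have "\<bar>y-x\<bar> = x - y" using r by auto
      moreover have "\<delta> powr p / (x-y) powr (1+p) = \<delta> powr p * (x-y) powr (-1-p)"
        using powr_minus[of "x-y" "1+p"] by (simp add: divide_inverse)
      ultimately show ?thesis using True y by (simp add: ennreal_mult'[symmetric])
    qed simp
  qed
  also have "\<dots> = ennreal (\<delta> powr p) * (\<integral>\<^sup>+y. indicator {..x-r} y * ennreal ((x-y) powr (-1-p)) \<partial>lborel)"
    by (rule nn_integral_cmult) measurable
  also have "\<dots> = ennreal (\<delta> powr p) * ennreal (r powr (-p) / p)" using tail_int_left[OF r p] by simp
  also have "\<dots> = ennreal (\<delta> powr p * (r powr (-p) / p))" using p by (simp add: ennreal_mult[symmetric])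
  finally show ?thesis .
qed

lemma r_bound:
  fixes w K c \<delta> p :: real
  assumes w: "w > 0" and K: "K \<ge> 0" and c: "c > 0" and d: "\<delta> > 0" and p: "p > 0"
  defines "r \<equiv> (if K = 0 then w else min w (c*\<delta>/K))"
  shows "r > 0" "r \<le> w" "K > 0 \<Longrightarrow> r \<le> c*\<delta>/K"
    "\<delta> powr p * (r powr (-p) / p) \<le> (\<delta> powr p * w powr (-p) + K powr p * c powr (-p)) / p"
proof -
  show "r > 0" "r \<le> w" "K > 0 \<Longrightarrow> r \<le> c*\<delta>/K" using assms by (auto simp: r_def)
  have nn: "0 \<le> K powr p * c powr (-p)" "0 \<le> \<delta> powr p * w powr (-p)" by auto
  have "\<delta> powr p * r powr (-p) \<le> \<delta> powr p * w powr (-p) + K powr p * c powr (-p)"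
  proof (cases "r = w")
    case True then show ?thesis using nn by simp
  next
    case False
    then have K0: "K > 0" and rr: "r = c*\<delta>/K" using K by (auto simp: r_def min_def split: if_splits)
    have "\<delta> powr p * r powr (-p) = \<delta> powr p * ((c*\<delta>) powr (-p) / K powr (-p))"
      using rr K0 c d by (simp add: powr_divide)
    also have "\<dots> = K powr p * c powr (-p)"
      using K0 c d by (simp add: powr_mult powr_minus field_simps)
    finally show ?thesis using nn by simp
  qed
  then show "\<delta> powr p * (r powr (-p) / p) \<le> (\<delta> powr p * w powr (-p) + K powr p * c powr (-p)) / p"
    using p by (simp add: divide_right_mono)
qed

lemma win_right:
  fixes x w K c \<delta> p :: real
  assumes w: "w > 0" and K: "K \<ge> 0" and c: "c > 0" and d: "\<delta> > 0" and p: "p > 0"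
    and A: "A \<subseteq> {x<..}" and H: "\<And>y. y \<in> A \<Longrightarrow> y - x < w \<Longrightarrow> c*\<delta> \<le> K*(y-x)"
  shows "(\<integral>\<^sup>+y. indicator A y * ennreal (\<delta> powr p / \<bar>y-x\<bar> powr (1+p)) \<partial>lborel)
     \<le> ennreal ((\<delta> powr p * w powr (-p) + K powr p * c powr (-p)) / p)"
proof -
  define r where "r \<equiv> (if K = 0 then w else min w (c*\<delta>/K))"
  note rb = r_bound[OF w K c d p, folded r_def]
  have "A \<subseteq> {x+r..}"
  proof
    fix y assume y: "y \<in> A"
    show "y \<in> {x+r..}"
    proof (cases "y - x < w")
      case True
      with H[OF y] have h: "c*\<delta> \<le> K*(y-x)" .
      have "K > 0" proof (rule ccontr)
        assume "\<not> K > 0" then have "K = 0" using K by auto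
        then show False using h mult_pos_pos[OF c d] by simp
      qed
      then have "c*\<delta>/K \<le> y - x" using h by (simp add: divide_le_eq mult.commute)
      then show ?thesis using rb(3)[OF \<open>K>0\<close>] by auto
    next
      case False then show ?thesis using rb(2) by auto
    qed
  qed
  from kern_right[OF rb(1) p d this] rb(4) show ?thesis
    by (meson ennreal_leI order_trans)
qed

lemma win_left:
  fixes x w K c \<delta> p :: real
  assumes w: "w > 0" and K: "K \<ge> 0" and c: "c > 0" and d: "\<delta> > 0" and p: "p > 0"
    and A: "A \<subseteq> {..<x}" and H: "\<And>y. y \<in> A \<Longrightarrow> x - y < w \<Longrightarrow> c*\<delta> \<le> K*(x-y)"
  shows "(\<integral>\<^sup>+y. indicator A y * ennreal (\<delta> powr p / \<bar>y-x\<bar> powr (1+p)) \<partial>lborel)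
     \<le> ennreal ((\<delta> powr p * w powr (-p) + K powr p * c powr (-p)) / p)"
proof -
  define r where "r \<equiv> (if K = 0 then w else min w (c*\<delta>/K))"
  note rb = r_bound[OF w K c d p, folded r_def]
  have "A \<subseteq> {..x-r}"
  proof
    fix y assume y: "y \<in> A"
    show "y \<in> {..x-r}"
    proof (cases "x - y < w")
      case True
      with H[OF y] have h: "c*\<delta> \<le> K*(x-y)" .
      have "K > 0" proof (rule ccontr)
        assume "\<not> K > 0" then have "K = 0" using K by auto
        then show False using h mult_pos_pos[OF c d] by simp
      qed
      then have "c*\<delta>/K \<le> x - y" using h by (simp add: divide_le_eq mult.commute)
      then show ?thesis using rb(3)[OF \<open>K>0\<close>] by auto
    next
      case False then show ?thesis using rb(2) by auto
    qed
  qed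
  from kern_left[OF rb(1) p d this] rb(4) show ?thesis
    by (meson ennreal_leI order_trans)
qed

lemma incr_le:
  fixes u u' :: "real \<Rightarrow> real"
  assumes S: "finite S" and der: "\<And>x. x \<notin> S \<Longrightarrow> (u has_real_derivative u' x) (at x)"
    and cont: "continuous_on UNIV u" and ab: "a \<le> b"
    and bnd: "\<And>t. t \<in> {a..b} \<Longrightarrow> t \<notin> S \<Longrightarrow> u' t \<le> P" and P: "P \<ge> 0"
  shows "u b - u a \<le> P * (b - a)"
proof -
  define ud where "ud t = (if t \<in> S then 0 else u' t)" for t
  have "(ud has_integral (u b - u a)) {a..b}"
  proof (rule fundamental_theorem_of_calculus_interior_strong[OF S ab])
    fix x assume "x \<in> {a<..<b} - S"
    then show "(u has_vector_derivative ud x) (at x)"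
      using der[of x] by (simp add: ud_def has_real_derivative_iff_has_vector_derivative)
  next
    show "continuous_on {a..b} u" using cont continuous_on_subset by blast
  qed
  moreover have "((\<lambda>x. P) has_integral (P * (b - a))) {a..b}"
    using has_integral_const_real[of P a b] ab by (simp add: mult.commute)
  ultimately show "u b - u a \<le> P * (b - a)"
    by (rule has_integral_le) (use bnd P in \<open>auto simp: ud_def\<close>)
qed

lemma decr_le:
  fixes u u' :: "real \<Rightarrow> real"
  assumes S: "finite S" and der: "\<And>x. x \<notin> S \<Longrightarrow> (u has_real_derivative u' x) (at x)"
    and cont: "continuous_on UNIV u" and ab: "a \<le> b"
    and bnd: "\<And>t. t \<in> {a..b} \<Longrightarrow> t \<notin> S \<Longrightarrow> -Q \<le> u' t" and Q: "Q \<ge> 0"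
  shows "u a - u b \<le> Q * (b - a)"
proof -
  have "(\<lambda>x. - u x) b - (\<lambda>x. - u x) a \<le> Q * (b - a)"
  proof (rule incr_le[OF S _ _ ab _ Q])
    show "((\<lambda>x. - u x) has_real_derivative - u' x) (at x)" if "x \<notin> S" for x
      using der[OF that] by (rule DERIV_minus)
    show "continuous_on UNIV (\<lambda>x. - u x)" using cont by (intro continuous_intros)
    show "- u' t \<le> Q" if "t \<in> {a..b}" "t \<notin> S" for t using bnd[OF that] by simp
  qed
  then show ?thesis by simp
qed

definition Hf :: "real \<Rightarrow> real \<Rightarrow> real" where
  "Hf p t = (2 - t) powr (-p) + (1 + t) powr (-p)"

lemma pointwise:
  fixes u u' :: "real \<Rightarrow> real" and S :: "real set" and \<delta> p w P Q x :: real
  assumes S: "finite S" and der: "\<And>x. x \<notin> S \<Longrightarrow> (u has_real_derivative u' x) (at x)"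
    and cont: "continuous_on UNIV u" and d: "\<delta> > 0" and p: "p > 0" and w: "w > 0"
    and P: "P \<ge> 0" and Q: "Q \<ge> 0"
    and bnd: "\<And>t. t \<in> {x-w..x+w} \<Longrightarrow> t \<notin> S \<Longrightarrow> -Q \<le> u' t \<and> u' t \<le> P"
  shows "(\<integral>\<^sup>+y. indicator {y. \<bar>S_floor \<delta> u y - S_floor \<delta> u x\<bar> > \<delta>} y * ennreal (\<delta> powr p / \<bar>y-x\<bar> powr (1+p)) \<partial>lborel)
    \<le> ennreal ((4 * (\<delta> powr p * w powr (-p)) + (P powr p + Q powr p) * Hf p (frac (u x / \<delta>))) / p)"
proof -
  note [measurable] = borel_measurable_continuous_onI[OF cont]
  define n where "n y = \<lfloor>u y / \<delta>\<rfloor>" for y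
  define \<theta> where "\<theta> = frac (u x / \<delta>)"
  have th: "0 \<le> \<theta>" "\<theta> < 1" "u x = \<delta> * (real_of_int (n x) + \<theta>)"
    using d frac_lt_1[of "u x / \<delta>"] frac_ge_0[of "u x / \<delta>"] by (auto simp: \<theta>_def n_def frac_def)
  have nlow: "\<delta> * real_of_int (n y) \<le> u y" for y
  proof -
    have "real_of_int (n y) \<le> u y / \<delta>" by (simp add: n_def)
    then have "\<delta> * real_of_int (n y) \<le> \<delta> * (u y / \<delta>)" using d by (intro mult_left_mono) auto
    then show ?thesis using d by simp
  qed
  have nup: "u y < \<delta> * (real_of_int (n y) + 1)" for y
  proof -
    have "u y / \<delta> < real_of_int (n y) + 1" by (simp add: n_def)
    then have "\<delta> * (u y / \<delta>) < \<delta> * (real_of_int (n y) + 1)" using d by (intro mult_strict_left_mono) auto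
    then show ?thesis using d by simp
  qed
  define k where "k y = indicator {y. \<bar>S_floor \<delta> u y - S_floor \<delta> u x\<bar> > \<delta>} y * ennreal (\<delta> powr p / \<bar>y-x\<bar> powr (1+p))" for y
  define A1 where "A1 = {y. x < y \<and> n x + 2 \<le> n y}"
  define A2 where "A2 = {y. x < y \<and> n y \<le> n x - 2}"
  define A3 where "A3 = {y. y < x \<and> n x + 2 \<le> n y}"
  define A4 where "A4 = {y. y < x \<and> n y \<le> n x - 2}"
  define ker where "ker y = ennreal (\<delta> powr p / \<bar>y-x\<bar> powr (1+p))" for y
  have mA: "A1 \<in> sets borel" "A2 \<in> sets borel" "A3 \<in> sets borel" "A4 \<in> sets borel"
    unfolding A1_def A2_def A3_def A4_def n_def by measurable
  have mk: "ker \<in> borel_measurable borel" unfolding ker_def by measurable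
  have pt: "k y \<le> indicator A1 y * ker y + indicator A2 y * ker y + indicator A3 y * ker y + indicator A4 y * ker y" for y
  proof (cases "\<bar>S_floor \<delta> u y - S_floor \<delta> u x\<bar> > \<delta>")
    case True
    then have "\<delta> * \<bar>real_of_int (n y - n x)\<bar> > \<delta> * 1"
      using d by (simp add: S_floor_def n_def abs_mult right_diff_distrib[symmetric])
    then have "\<bar>n y - n x\<bar> > 1" using d by (simp add: mult_less_cancel_left_pos)
    then have "n x + 2 \<le> n y \<or> n y \<le> n x - 2" by linarith
    moreover have "y \<noteq> x" using True d by auto
    ultimately have "y \<in> A1 \<or> y \<in> A2 \<or> y \<in> A3 \<or> y \<in> A4"
      unfolding A1_def A2_def A3_def A4_def by auto
    then show ?thesis unfolding k_def using True
      by (auto simp: indicator_def ker_def[symmetric] intro: add_increasing add_increasing2)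
  next
    case False then show ?thesis unfolding k_def by simp
  qed
  have sub: "\<And>a b. x - w \<le> a \<Longrightarrow> b \<le> x + w \<Longrightarrow> t \<in> {a..b} \<Longrightarrow> t \<in> {x-w..x+w}" for t by auto
  have c1: "2 - \<theta> > 0" and c2: "1 + \<theta> > 0" using th by auto
  have I1: "(\<integral>\<^sup>+y. indicator A1 y * ker y \<partial>lborel) \<le> ennreal ((\<delta> powr p * w powr (-p) + P powr p * (2-\<theta>) powr (-p)) / p)"
    unfolding ker_def
  proof (rule win_right[OF w P c1 d p])
    show "A1 \<subseteq> {x<..}" by (auto simp: A1_def)
    fix y assume y: "y \<in> A1" "y - x < w"
    have "u y - u x \<le> P * (y - x)"
      by (rule incr_le[OF S der cont]) (use y bnd in \<open>auto simp: A1_def\<close>, use P in auto)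
    moreover have "(2 - \<theta>) * \<delta> \<le> u y - u x"
    proof -
      have "real_of_int (n x) + 2 \<le> real_of_int (n y)" using y by (simp add: A1_def)
      then have "\<delta> * (real_of_int (n x) + 2) \<le> \<delta> * real_of_int (n y)" using d by simp
      then show ?thesis using nlow[of y] th(3) by (simp add: algebra_simps)
    qed
    ultimately show "(2 - \<theta>) * \<delta> \<le> P * (y - x)" by linarith
  qed
  have I2: "(\<integral>\<^sup>+y. indicator A2 y * ker y \<partial>lborel) \<le> ennreal ((\<delta> powr p * w powr (-p) + Q powr p * (1+\<theta>) powr (-p)) / p)"
    unfolding ker_def
  proof (rule win_right[OF w Q c2 d p])
    show "A2 \<subseteq> {x<..}" by (auto simp: A2_def)
    fix y assume y: "y \<in> A2" "y - x < w"
    have "u x - u y \<le> Q * (y - x)"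
      by (rule decr_le[OF S der cont]) (use y bnd in \<open>auto simp: A2_def\<close>, use Q in auto)
    moreover have "(1 + \<theta>) * \<delta> \<le> u x - u y"
    proof -
      have "real_of_int (n y) + 1 \<le> real_of_int (n x) - 1" using y by (simp add: A2_def)
      then have "\<delta> * (real_of_int (n y) + 1) \<le> \<delta> * (real_of_int (n x) - 1)" using d by simp
      then show ?thesis using nup[of y] th(3) by (simp add: algebra_simps)
    qed
    ultimately show "(1 + \<theta>) * \<delta> \<le> Q * (y - x)" by linarith
  qed
  have I3: "(\<integral>\<^sup>+y. indicator A3 y * ker y \<partial>lborel) \<le> ennreal ((\<delta> powr p * w powr (-p) + Q powr p * (2-\<theta>) powr (-p)) / p)"
    unfolding ker_def
  proof (rule win_left[OF w Q c1 d p])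
    show "A3 \<subseteq> {..<x}" by (auto simp: A3_def)
    fix y assume y: "y \<in> A3" "x - y < w"
    have "u y - u x \<le> Q * (x - y)"
      by (rule decr_le[OF S der cont]) (use y bnd in \<open>auto simp: A3_def\<close>, use Q in auto)
    moreover have "(2 - \<theta>) * \<delta> \<le> u y - u x"
    proof -
      have "real_of_int (n x) + 2 \<le> real_of_int (n y)" using y by (simp add: A3_def)
      then have "\<delta> * (real_of_int (n x) + 2) \<le> \<delta> * real_of_int (n y)" using d by simp
      then show ?thesis using nlow[of y] th(3) by (simp add: algebra_simps)
    qed
    ultimately show "(2 - \<theta>) * \<delta> \<le> Q * (x - y)" by linarith
  qed
  have I4: "(\<integral>\<^sup>+y. indicator A4 y * ker y \<partial>lborel) \<le> ennreal ((\<delta> powr p * w powr (-p) + P powr p * (1+\<theta>) powr (-p)) / p)"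
    unfolding ker_def
  proof (rule win_left[OF w P c2 d p])
    show "A4 \<subseteq> {..<x}" by (auto simp: A4_def)
    fix y assume y: "y \<in> A4" "x - y < w"
    have "u x - u y \<le> P * (x - y)"
      by (rule incr_le[OF S der cont]) (use y bnd in \<open>auto simp: A4_def\<close>, use P in auto)
    moreover have "(1 + \<theta>) * \<delta> \<le> u x - u y"
    proof -
      have "real_of_int (n y) + 1 \<le> real_of_int (n x) - 1" using y by (simp add: A4_def)
      then have "\<delta> * (real_of_int (n y) + 1) \<le> \<delta> * (real_of_int (n x) - 1)" using d by simp
      then show ?thesis using nup[of y] th(3) by (simp add: algebra_simps)
    qed
    ultimately show "(1 + \<theta>) * \<delta> \<le> P * (x - y)" by linarith
  qed
  have "(\<integral>\<^sup>+y. k y \<partial>lborel) \<le> (\<integral>\<^sup>+y. indicator A1 y * ker y + indicator A2 y * ker y + indicator A3 y * ker y + indicator A4 y * ker y \<partial>lborel)"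
    by (rule nn_integral_mono) (rule pt)
  also have "\<dots> = (\<integral>\<^sup>+y. indicator A1 y * ker y \<partial>lborel) + (\<integral>\<^sup>+y. indicator A2 y * ker y \<partial>lborel)
      + (\<integral>\<^sup>+y. indicator A3 y * ker y \<partial>lborel) + (\<integral>\<^sup>+y. indicator A4 y * ker y \<partial>lborel)"
    using mA mk by (simp add: nn_integral_add)
  also have "\<dots> \<le> ennreal ((\<delta> powr p * w powr (-p) + P powr p * (2-\<theta>) powr (-p)) / p)
     + ennreal ((\<delta> powr p * w powr (-p) + Q powr p * (1+\<theta>) powr (-p)) / p)
     + ennreal ((\<delta> powr p * w powr (-p) + Q powr p * (2-\<theta>) powr (-p)) / p)
     + ennreal ((\<delta> powr p * w powr (-p) + P powr p * (1+\<theta>) powr (-p)) / p)"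
    using I1 I2 I3 I4 by (intro add_mono) auto
  also have "\<dots> = ennreal ((4 * (\<delta> powr p * w powr (-p)) + (P powr p + Q powr p) * Hf p \<theta>) / p)"
    using p by (simp add: ennreal_plus[symmetric] Hf_def add_divide_distrib[symmetric] algebra_simps del: ennreal_plus)
  finally show ?thesis unfolding k_def \<theta>_def .
qed

lemma Hf_nonneg: "Hf p t \<ge> 0" by (simp add: Hf_def)

lemma powr_neg_le1: fixes x p :: real assumes "x \<ge> 1" "p \<ge> 0" shows "x powr (-p) \<le> 1"
proof -
  have "1 \<le> x powr p" using assms by (simp add: ge_one_powr_ge_zero)
  then show ?thesis using assms by (simp add: powr_minus inverse_le_1_iff)
qed

lemma Hf_le2: assumes "0 \<le> t" "t \<le> 1" "p \<ge> 0" shows "Hf p t \<le> 2"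
  using powr_neg_le1[of "2-t" p] powr_neg_le1[of "1+t" p] assms by (simp add: Hf_def)

lemma Hf_frac_le2: assumes "p \<ge> 0" shows "Hf p (frac s) \<le> 2"
  using Hf_le2[of "frac s" p] assms frac_lt_1[of s] frac_ge_0[of s] by simp

lemma Hf_frac_neg: "Hf p (frac (-s)) = Hf p (frac s)"
proof (cases "s \<in> \<int>")
  case True
  then have fs: "frac s = 0" by simp
  have "frac (-s) = 0" using True by (simp add: frac_neg)
  then show ?thesis by (simp only: fs)
next
  case False then show ?thesis by (simp add: frac_neg Hf_def add.commute)
qed

lemma Hf_has_integral:
  assumes p: "p \<ge> 1"
  shows "(Hf p has_integral (2 * C_const p)) {0..1}"
proof (cases "p = 1")
  case True
  define F where "F t = ln (1+t) - ln (2-t)" for t :: real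
  have "(Hf p has_integral (F 1 - F 0)) {0..1}"
  proof (rule fundamental_theorem_of_calculus)
    fix t :: real assume t: "t \<in> {0..1}"
    have "(F has_real_derivative (1/(1+t) + 1/(2-t))) (at t within {0..1})"
      unfolding F_def using t by (auto intro!: derivative_eq_intros)
    moreover have "1/(1+t) + 1/(2-t) = Hf p t" using True t by (simp add: Hf_def powr_minus_divide)
    ultimately show "(F has_vector_derivative Hf p t) (at t within {0..1})"
      by (simp add: has_real_derivative_iff_has_vector_derivative)
  qed simp
  moreover have "F 1 - F 0 = 2 * C_const p" using True by (simp add: F_def C_const_def)
  ultimately show ?thesis by simp
next
  case False
  then have p1: "p > 1" using p by auto
  define F where "F t = ((2-t) powr (1-p) - (1+t) powr (1-p)) / (p-1)" for t :: real
  have "(Hf p has_integral (F 1 - F 0)) {0..1}"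
  proof (rule fundamental_theorem_of_calculus)
    fix t :: real assume t: "t \<in> {0..1}"
    have "(F has_real_derivative
       (((1-p) * (2-t) powr (1-p-1) * (-1) - (1-p) * (1+t) powr (1-p-1) * 1) / (p-1))) (at t within {0..1})"
      unfolding F_def using t p1 by (auto intro!: derivative_eq_intros)
    moreover have "((1-p) * (2-t) powr (1-p-1) * (-1) - (1-p) * (1+t) powr (1-p-1) * 1) / (p-1) = Hf p t"
      using p1 by (simp add: Hf_def field_simps)
    ultimately show "(F has_vector_derivative Hf p t) (at t within {0..1})"
      by (simp add: has_real_derivative_iff_has_vector_derivative)
  qed simp
  moreover have "F 1 - F 0 = 2 * C_const p"
  proof -
    have e: "1 / 2 powr (p - 1) = 2 powr (1 - p)" by (simp add: powr_minus_divide[symmetric] powr_minus)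
    have "F 1 - F 0 = ((1 - 2 powr (1-p)) - (2 powr (1-p) - 1)) / (p - 1)"
      by (simp add: F_def diff_divide_distrib)
    also have "\<dots> = 2 * ((1 / (p - 1)) * (1 - 1 / 2 powr (p - 1)))" by (simp add: e field_simps)
    finally show ?thesis using p1 by (simp add: C_const_def)
  qed
  ultimately show ?thesis by simp
qed

lemma C_const_pos: "p \<ge> 1 \<Longrightarrow> C_const p > 0"
proof -
  assume p: "p \<ge> 1"
  show ?thesis
  proof (cases "p = 1")
    case True then show ?thesis by (simp add: C_const_def)
  next
    case False
    then have p1: "p > 1" using p by auto
    have "2 powr (p-1) > 1" using p1 by (simp add: gr_one_powr)
    then have "1 / 2 powr (p-1) < 1" by simp
    then show ?thesis using p1 by (simp add: C_const_def)
  qed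
qed

lemma Hf_frac_int01:
  assumes p: "p \<ge> 1"
  shows "(\<integral>\<^sup>+s. ennreal (Hf p (frac s)) * indicator {0..1} s \<partial>lborel) = ennreal (2 * C_const p)"
proof -
  have "(\<integral>\<^sup>+s. ennreal (Hf p (frac s)) * indicator {0..1} s \<partial>lborel) = (\<integral>\<^sup>+s. ennreal (Hf p s) * indicator {0..1} s \<partial>lborel)"
  proof (intro nn_integral_cong)
    fix s :: real
    show "ennreal (Hf p (frac s)) * indicator {0..1} s = ennreal (Hf p s) * indicator {0..1} s"
    proof (cases "s \<in> {0..<1}")
      case True then show ?thesis by (simp add: frac_eq)
    next
      case False then show ?thesis
        by (cases "s = 1") (auto simp: Hf_def indicator_def)
    qed
  qed
  also have "\<dots> = ennreal (2 * C_const p)"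
    by (rule nn_integral_has_integral_lebesgue'[OF _ Hf_has_integral[OF p]]) (simp add: Hf_nonneg)
  finally show ?thesis .
qed

lemma periodic_int_shift:
  fixes G :: "real \<Rightarrow> real" assumes per: "\<And>s. G (s + 1) = G s"
  shows "G (s + real_of_int k) = G s"
proof -
  have nat: "G (t + real n) = G t" for t n
  proof (induction n)
    case (Suc n)
    have "G (t + real (Suc n)) = G ((t + real n) + 1)" by (simp add: algebra_simps)
    also have "\<dots> = G (t + real n)" by (rule per)
    finally show ?case using Suc by simp
  qed simp
  show ?thesis
  proof (cases "k \<ge> 0")
    case True then show ?thesis using nat[of s "nat k"] by simp
  next
    case False
    then have "G (s + real_of_int k) = G ((s + real_of_int k) + real (nat (-k)))" using nat[of "s + real_of_int k" "nat (-k)"] by simp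
    also have "\<dots> = G s" using False by simp
    finally show ?thesis .
  qed
qed

lemma periodic_unit:
  fixes G :: "real \<Rightarrow> real" assumes per: "\<And>s. G (s + 1) = G s" and M: "G \<in> borel_measurable borel"
  shows "(\<integral>\<^sup>+s. ennreal (G s) * indicator {real_of_int k..real_of_int k+1} s \<partial>lborel)
    = (\<integral>\<^sup>+s. ennreal (G s) * indicator {0..1} s \<partial>lborel)"
proof -
  have "(\<integral>\<^sup>+s. ennreal (G s) * indicator {real_of_int k..real_of_int k+1} s \<partial>lborel)
    = (\<integral>\<^sup>+s. ennreal (G (real_of_int k + s)) * indicator {real_of_int k..real_of_int k+1} (real_of_int k + s) \<partial>lborel)"
    by (subst nn_integral_real_affine[where c=1 and t="real_of_int k"]) (use M in auto)
  also have "\<dots> = (\<integral>\<^sup>+s. ennreal (G s) * indicator {0..1} s \<partial>lborel)"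
    using periodic_int_shift[of G, OF per] by (intro nn_integral_cong) (auto simp: add.commute indicator_def)
  finally show ?thesis .
qed

lemma periodic_bound:
  fixes G :: "real \<Rightarrow> real" assumes per: "\<And>s. G (s + 1) = G s" and M: "G \<in> borel_measurable borel"
    and nn: "\<And>s. G s \<ge> 0"
  shows "(\<integral>\<^sup>+s. ennreal (G s) * indicator {\<alpha>..\<beta>} s \<partial>lborel)
    \<le> ennreal (\<beta> - \<alpha> + 2) * (\<integral>\<^sup>+s. ennreal (G s) * indicator {0..1} s \<partial>lborel)"
proof (cases "\<alpha> \<le> \<beta>")
  case False then show ?thesis by simp
next
  case True
  define K where "K = {\<lfloor>\<alpha>\<rfloor>..\<lfloor>\<beta>\<rfloor>}"
  define I where "I = (\<integral>\<^sup>+s. ennreal (G s) * indicator {0..1} s \<partial>lborel)"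
  have "(\<integral>\<^sup>+s. ennreal (G s) * indicator {\<alpha>..\<beta>} s \<partial>lborel)
      \<le> (\<integral>\<^sup>+s. (\<Sum>k\<in>K. ennreal (G s) * indicator {real_of_int k..real_of_int k+1} s) \<partial>lborel)"
  proof (intro nn_integral_mono)
    fix s
    show "ennreal (G s) * indicator {\<alpha>..\<beta>} s \<le> (\<Sum>k\<in>K. ennreal (G s) * indicator {real_of_int k..real_of_int k+1} s)"
    proof (cases "s \<in> {\<alpha>..\<beta>}")
      case True
      then have k: "\<lfloor>s\<rfloor> \<in> K" by (auto simp: K_def floor_mono)
      have "ennreal (G s) * indicator {\<alpha>..\<beta>} s = ennreal (G s) * indicator {real_of_int \<lfloor>s\<rfloor>..real_of_int \<lfloor>s\<rfloor>+1} s"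
        using True by (simp add: indicator_def)
      also have "\<dots> \<le> (\<Sum>k\<in>K. ennreal (G s) * indicator {real_of_int k..real_of_int k+1} s)"
        by (rule member_le_sum[OF k]) (auto simp: K_def)
      finally show ?thesis .
    qed simp
  qed
  also have "\<dots> = (\<Sum>k\<in>K. (\<integral>\<^sup>+s. ennreal (G s) * indicator {real_of_int k..real_of_int k+1} s \<partial>lborel))"
    by (rule nn_integral_sum) (use M in auto)
  also have "\<dots> = (\<Sum>k\<in>K. I)" unfolding I_def using periodic_unit[OF per M] by simp
  also have "\<dots> = of_nat (card K) * I" by simp
  also have "\<dots> \<le> ennreal (\<beta> - \<alpha> + 2) * I"
  proof (intro mult_right_mono)
    have "real (card K) = real_of_int (\<lfloor>\<beta>\<rfloor> - \<lfloor>\<alpha>\<rfloor> + 1)" using True by (simp add: K_def floor_mono)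
    also have "\<dots> \<le> \<beta> - \<alpha> + 2" by linarith
    finally show "(of_nat (card K) :: ennreal) \<le> ennreal (\<beta> - \<alpha> + 2)"
      by (metis ennreal_leI ennreal_of_nat_eq_real_of_nat)
  qed simp
  finally show ?thesis unfolding I_def .
qed

lemma subst_bound:
  fixes G g g' :: "real \<Rightarrow> real"
  assumes per: "\<And>s. G (s + 1) = G s" and M: "G \<in> borel_measurable borel" and nn: "\<And>s. G s \<ge> 0"
    and ab: "a \<le> b" and der: "\<And>x. x \<in> {a..b} \<Longrightarrow> (g has_real_derivative g' x) (at x)"
    and cg: "continuous_on {a..b} g'" and m: "m > 0" and gm: "\<And>x. x \<in> {a..b} \<Longrightarrow> g' x \<ge> m"
  shows "(\<integral>\<^sup>+x. ennreal (G (g x)) * indicator {a..b} x \<partial>lborel)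
    \<le> ennreal ((g b - g a + 2) / m) * (\<integral>\<^sup>+s. ennreal (G s) * indicator {0..1} s \<partial>lborel)"
proof -
  define cl where "cl x = max a (min b x)" for x
  have clab: "cl x \<in> {a..b}" for x using ab by (auto simp: cl_def)
  have ccl: "continuous_on UNIV cl" unfolding cl_def by (intro continuous_intros)
  have cgg: "continuous_on {a..b} g" using der by (rule has_real_derivative_imp_continuous_on)
  have c2: "continuous_on UNIV (g \<circ> cl)"
    by (rule continuous_on_compose[OF ccl continuous_on_subset[OF cgg]]) (use clab in auto)
  have c3: "continuous_on UNIV (g' \<circ> cl)"
    by (rule continuous_on_compose[OF ccl continuous_on_subset[OF cg]]) (use clab in auto)
  note [measurable] = borel_measurable_continuous_onI[OF c2] borel_measurable_continuous_onI[OF c3] M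
  define h where "h x = ennreal (G (g x) * g' x * indicator {a..b} x)" for x
  have h2: "h x = ennreal (G ((g \<circ> cl) x) * (g' \<circ> cl) x * indicator {a..b} x)" for x
    by (cases "x \<in> {a..b}") (auto simp: h_def cl_def)
  have hm: "h \<in> borel_measurable borel" unfolding h2 by measurable
  have "(\<integral>\<^sup>+x. ennreal (G (g x)) * indicator {a..b} x \<partial>lborel)
     \<le> (\<integral>\<^sup>+x. ennreal (1/m) * h x \<partial>lborel)"
  proof (intro nn_integral_mono)
    fix x show "ennreal (G (g x)) * indicator {a..b} x \<le> ennreal (1/m) * h x"
    proof (cases "x \<in> {a..b}")
      case True
      have "G (g x) \<le> 1/m * (G (g x) * g' x)"
        using gm[OF True] m nn[of "g x"] by (simp add: field_simps mult_right_mono)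
      then show ?thesis using True m nn[of "g x"] gm[OF True]
        by (simp add: h_def ennreal_mult'[symmetric] ennreal_leI)
    qed simp
  qed
  also have "\<dots> = ennreal (1/m) * (\<integral>\<^sup>+x. h x \<partial>lborel)"
    by (rule nn_integral_cmult) (use hm in simp)
  also have "(\<integral>\<^sup>+x. h x \<partial>lborel) = (\<integral>\<^sup>+x. ennreal (G x * indicator {g a..g b} x) \<partial>lborel)"
    unfolding h_def
  proof (rule nn_integral_substitution[symmetric, OF _ der cg _ ab])
    show "set_borel_measurable borel {g a..g b} G" unfolding set_borel_measurable_def by measurable
    show "\<And>x. x \<in> {a..b} \<Longrightarrow> 0 \<le> g' x" using gm m by (meson less_le_trans less_imp_le)
  qed auto
  also have "\<dots> = (\<integral>\<^sup>+x. ennreal (G x) * indicator {g a..g b} x \<partial>lborel)"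
    by (intro nn_integral_cong) (simp add: indicator_def)
  also have "\<dots> \<le> ennreal (g b - g a + 2) * (\<integral>\<^sup>+s. ennreal (G s) * indicator {0..1} s \<partial>lborel)"
    by (rule periodic_bound[OF per M nn])
  finally have "(\<integral>\<^sup>+x. ennreal (G (g x)) * indicator {a..b} x \<partial>lborel)
    \<le> ennreal (1/m) * (ennreal (g b - g a + 2) * (\<integral>\<^sup>+s. ennreal (G s) * indicator {0..1} s \<partial>lborel))"
    by (simp add: mult_left_mono)
  also have "\<dots> = ennreal ((g b - g a + 2) / m) * (\<integral>\<^sup>+s. ennreal (G s) * indicator {0..1} s \<partial>lborel)"
    using m by (simp add: ennreal_mult'[symmetric] mult.assoc[symmetric])
  finally show ?thesis .
qed

lemma Lambda_iter:
  assumes cont: "continuous_on UNIV u"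
  shows "Lambda \<delta> p (S_floor \<delta> u) = (\<integral>\<^sup>+x. (\<integral>\<^sup>+y. indicator {y. \<bar>S_floor \<delta> u y - S_floor \<delta> u x\<bar> > \<delta>} y
      * ennreal (\<delta> powr p / \<bar>y - x\<bar> powr (1+p)) \<partial>lborel) \<partial>lborel)"
proof -
  note [measurable] = borel_measurable_continuous_onI[OF cont]
  have m: "(\<lambda>z. indicator {(x, y). \<bar>S_floor \<delta> u y - S_floor \<delta> u x\<bar> > \<delta>} z *
              ennreal (\<delta> powr p / \<bar>snd z - fst z\<bar> powr (1 + p))) \<in> borel_measurable (lborel \<Otimes>\<^sub>M lborel)"
    unfolding S_floor_def by measurable
  show ?thesis unfolding Lambda_def
    by (subst lborel.nn_integral_fst[OF m, symmetric]) (simp add: indicator_def)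
qed

lemma deriv_lip_bound:
  fixes u :: "real \<Rightarrow> real"
  assumes L: "L-lipschitz_on UNIV u" and d: "(u has_real_derivative D) (at x)"
  shows "\<bar>D\<bar> \<le> L"
proof -
  have lim: "((\<lambda>h. (u (x + h) - u x) / h) \<longlongrightarrow> D) (at 0)" using d by (simp add: DERIV_def)
  then have lim2: "((\<lambda>h. \<bar>(u (x + h) - u x) / h\<bar>) \<longlongrightarrow> \<bar>D\<bar>) (at 0)" by (rule tendsto_rabs)
  have "\<forall>\<^sub>F h in at 0. \<bar>(u (x + h) - u x) / h\<bar> \<le> L"
  proof (rule eventually_at_filter[THEN iffD2], rule always_eventually, intro allI impI)
    fix h :: real assume "h \<noteq> 0"
    have "\<bar>u (x + h) - u x\<bar> \<le> L * \<bar>h\<bar>" using L unfolding lipschitz_on_def dist_real_def by (metis UNIV_I add_diff_cancel_left')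
    then show "\<bar>(u (x + h) - u x) / h\<bar> \<le> L" using \<open>h \<noteq> 0\<close> by (simp add: abs_divide divide_le_eq)
  qed
  from tendsto_upperbound[OF lim2 this] show ?thesis by simp
qed

lemma count_near:
  fixes A0 \<eta> s r :: real assumes eta: "\<eta> > 0" and r: "r \<ge> 0"
  shows "real (card {i\<in>{..<n}. \<bar>A0 + real i * \<eta> - s\<bar> \<le> r}) \<le> 2 * r / \<eta> + 1"
proof -
  define T where "T = {i\<in>{..<n}. \<bar>A0 + real i * \<eta> - s\<bar> \<le> r}"
  define lo where "lo = \<lceil>(s - r - A0) / \<eta>\<rceil>"
  define hi where "hi = \<lfloor>(s + r - A0) / \<eta>\<rfloor>"
  have sub: "int ` T \<subseteq> {lo..hi}"
  proof
    fix j assume "j \<in> int ` T"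
    then obtain i where i: "i \<in> T" "j = int i" by auto
    then have "s - r \<le> A0 + real i * \<eta>" "A0 + real i * \<eta> \<le> s + r" by (auto simp: T_def)
    then have "(s - r - A0) / \<eta> \<le> real i" "real i \<le> (s + r - A0) / \<eta>" using eta by (auto simp: field_simps)
    then show "j \<in> {lo..hi}" using i by (auto simp: lo_def hi_def ceiling_le_iff le_floor_iff)
  qed
  have "card T = card (int ` T)" by (simp add: card_image)
  also have "\<dots> \<le> card {lo..hi}" using sub by (rule card_mono[rotated]) simp
  finally have c: "real (card T) \<le> real (card {lo..hi})" by simp
  have "real (card {lo..hi}) \<le> 2 * r / \<eta> + 1"
  proof (cases "lo \<le> hi")
    case True
    have "real (card {lo..hi}) = real_of_int (hi - lo + 1)" using True by simp
    also have "\<dots> \<le> (s + r - A0) / \<eta> - (s - r - A0) / \<eta> + 1"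
    proof -
      have "real_of_int hi \<le> (s+r-A0)/\<eta>" "(s-r-A0)/\<eta> \<le> real_of_int lo" by (simp_all add: hi_def lo_def)
      then show ?thesis by simp
    qed
    also have "\<dots> = 2 * r / \<eta> + 1" using eta by (simp add: diff_divide_distrib[symmetric] add_divide_distrib[symmetric])
    finally show ?thesis .
  next
    case False then show ?thesis using eta r by simp
  qed
  with c show ?thesis unfolding T_def by linarith
qed

lemma meas_h:
  assumes "continuous_on UNIV u"
  shows "(\<lambda>x. Hf p (frac (u x / \<delta>))) \<in> borel_measurable borel"
proof -
  note [measurable] = borel_measurable_continuous_onI[OF assms]
  show ?thesis unfolding Hf_def frac_def by measurable
qed

lemma meas_Hfrac: "(\<lambda>s. Hf p (frac s)) \<in> borel_measurable borel"
  unfolding Hf_def frac_def by measurable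

lemma hint_bound:
  fixes u g g' :: "real \<Rightarrow> real"
  assumes p: "p \<ge> 1" and eta: "\<eta> > 0"
    and der: "\<And>x. x \<in> {a..a+\<eta>} \<Longrightarrow> (g has_real_derivative g' x) (at x)"
    and cg: "continuous_on {a..a+\<eta>} g'" and m: "m > 0" and gm: "\<And>x. x \<in> {a..a+\<eta>} \<Longrightarrow> g' x \<ge> m"
    and eq: "\<And>x. Hf p (frac (u x / \<delta>)) = Hf p (frac (g x))"
  shows "(\<integral>\<^sup>+x. ennreal (Hf p (frac (u x / \<delta>))) * indicator {a..<a+\<eta>} x \<partial>lborel)
     \<le> ennreal ((g (a+\<eta>) - g a + 2) / m * (2 * C_const p))"
proof -
  have per: "\<And>s. Hf p (frac (s + 1)) = Hf p (frac s)" by (simp add: frac_def)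
  have "(\<integral>\<^sup>+x. ennreal (Hf p (frac (u x / \<delta>))) * indicator {a..<a+\<eta>} x \<partial>lborel)
     \<le> (\<integral>\<^sup>+x. ennreal (Hf p (frac (g x))) * indicator {a..a+\<eta>} x \<partial>lborel)"
    by (intro nn_integral_mono) (auto simp: eq indicator_def)
  also have "\<dots> \<le> ennreal ((g (a+\<eta>) - g a + 2) / m) * (\<integral>\<^sup>+s. ennreal (Hf p (frac s)) * indicator {0..1} s \<partial>lborel)"
    by (rule subst_bound[where G="\<lambda>s. Hf p (frac s)", OF per meas_Hfrac Hf_nonneg _ der cg m gm])
       (use eta in auto)
  also have "\<dots> = ennreal ((g (a+\<eta>) - g a + 2) / m) * ennreal (2 * C_const p)"
    by (simp add: Hf_frac_int01[OF p])
  also have "\<dots> = ennreal ((g (a+\<eta>) - g a + 2) / m * (2 * C_const p))"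
    using C_const_pos[OF p] by (subst ennreal_mult''[symmetric]) auto
  finally show ?thesis .
qed

lemma good_real:
  fixes c \<tau> \<epsilon> \<eta> \<Delta> \<delta> p Cp :: real
  assumes c: "c > 0" and eps: "0 < \<epsilon>" "\<epsilon> < 1" and tau: "0 \<le> \<tau>" "\<tau> \<le> \<epsilon> * c"
    and eta: "\<eta> > 0" and D: "\<Delta> \<le> (c + \<tau>) * \<eta>" and d: "\<delta> > 0" and p: "p \<ge> 1" and Cp: "Cp > 0"
  shows "(c + \<tau>) powr p / p * ((\<Delta> + 2 * \<delta>) / (c - \<tau>) * (2 * Cp))
    \<le> 2 * Cp / p * ((1 + \<epsilon>) / (1 - \<epsilon>)) powr (p + 1) * (\<eta> * (c - \<tau>) powr p)
      + 2 * Cp / p * ((c + \<tau>) powr p * (2 * \<delta>) / (c - \<tau>))"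
proof -
  have ct: "c - \<tau> > 0" using tau eps c by (smt (verit) mult_less_cancel_right2)
  have cp: "c + \<tau> > 0" using c tau by linarith
  have ratio: "(c + \<tau>) / (c - \<tau>) \<le> (1 + \<epsilon>) / (1 - \<epsilon>)"
  proof -
    have "(c + \<tau>) * (1 - \<epsilon>) \<le> (1 + \<epsilon>) * (c - \<tau>)" using tau eps by (simp add: algebra_simps)
    then show ?thesis using ct eps by (simp add: divide_simps)
  qed
  have "(c + \<tau>) powr (p + 1) / (c - \<tau>) = ((c + \<tau>) / (c - \<tau>)) powr (p + 1) * (c - \<tau>) powr p"
  proof -
    have "((c + \<tau>) / (c - \<tau>)) powr (p + 1) * (c - \<tau>) powr p
        = (c + \<tau>) powr (p + 1) / ((c - \<tau>) powr (p + 1)) * (c - \<tau>) powr p"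
      using ct cp by (simp add: powr_divide)
    also have "\<dots> = (c + \<tau>) powr (p + 1) / (c - \<tau>)"
      using ct by (simp add: powr_add field_simps)
    finally show ?thesis by simp
  qed
  also have "\<dots> \<le> ((1 + \<epsilon>) / (1 - \<epsilon>)) powr (p + 1) * (c - \<tau>) powr p"
    using ratio ct cp p by (intro mult_right_mono powr_mono2) auto
  finally have key: "(c + \<tau>) powr (p + 1) / (c - \<tau>) \<le> ((1 + \<epsilon>) / (1 - \<epsilon>)) powr (p + 1) * (c - \<tau>) powr p" .
  have eq: "(c + \<tau>) powr p / p * ((\<Delta> + 2 * \<delta>) / (c - \<tau>) * (2 * Cp))
      = 2 * Cp / p * ((c + \<tau>) powr p * \<Delta> / (c - \<tau>)) + 2 * Cp / p * ((c + \<tau>) powr p * (2 * \<delta>) / (c - \<tau>))"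
    using ct p by (simp add: field_simps add_divide_distrib[symmetric])
  have "(c + \<tau>) powr p * \<Delta> / (c - \<tau>) \<le> (c + \<tau>) powr p * ((c + \<tau>) * \<eta>) / (c - \<tau>)"
    using D ct by (intro divide_right_mono mult_left_mono) auto
  also have "(c + \<tau>) powr p * ((c + \<tau>) * \<eta>) / (c - \<tau>) = (c + \<tau>) powr (p + 1) / (c - \<tau>) * \<eta>"
    using cp by (simp add: powr_add field_simps)
  also have "\<dots> \<le> ((1 + \<epsilon>) / (1 - \<epsilon>)) powr (p + 1) * (c - \<tau>) powr p * \<eta>"
    using key eta by (intro mult_right_mono) auto
  finally have X: "(c + \<tau>) powr p * \<Delta> / (c - \<tau>) \<le> ((1 + \<epsilon>) / (1 - \<epsilon>)) powr (p + 1) * (\<eta> * (c - \<tau>) powr p)"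
    by (simp add: mult_ac)
  have "2 * Cp / p * ((c + \<tau>) powr p * \<Delta> / (c - \<tau>)) \<le> 2 * Cp / p * (((1 + \<epsilon>) / (1 - \<epsilon>)) powr (p + 1) * (\<eta> * (c - \<tau>) powr p))"
    using X Cp p by (intro mult_left_mono) auto
  then show ?thesis unfolding eq by (simp add: mult.assoc)
qed

lemma cell_good:
  fixes u u' :: "real \<Rightarrow> real" and \<sigma> a c \<tau> \<kappa> \<epsilon> \<eta> \<delta> p L :: real
  assumes p: "p \<ge> 1" and S: "finite S" and der: "\<And>x. x \<notin> S \<Longrightarrow> (u has_real_derivative u' x) (at x)"
    and cu': "continuous_on (-S) u'" and cont: "continuous_on UNIV u"
    and sig: "\<sigma> = 1 \<or> \<sigma> = -1" and eta: "\<eta> > 0" and d: "\<delta> > 0"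
    and eps: "0 < \<epsilon>" "\<epsilon> \<le> 1/2" and kap: "\<kappa> > 0" and tau: "\<tau> = \<epsilon> * \<kappa>"
    and cb: "\<kappa> \<le> \<bar>c\<bar>" "\<bar>c\<bar> \<le> L" "\<tau> \<le> 1"
    and on: "\<And>t. t \<in> {a..a+\<eta>} \<Longrightarrow> t \<notin> S \<and> \<bar>c\<bar> - \<tau> \<le> \<sigma> * u' t \<and> \<sigma> * u' t \<le> \<bar>c\<bar> + \<tau>"
  shows "ennreal ((\<bar>c\<bar> + \<tau>) powr p / p) * (\<integral>\<^sup>+x. ennreal (Hf p (frac (u x / \<delta>))) * indicator {a..<a+\<eta>} x \<partial>lborel)
    \<le> ennreal (2 * C_const p / p * ((L + 1) powr p * (2 * \<delta>) / (\<kappa> / 2)))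
      + ennreal (2 * C_const p / p * ((1 + \<epsilon>) / (1 - \<epsilon>)) powr (p + 1)) * (\<integral>\<^sup>+x. ennreal (\<bar>u' x\<bar> powr p) * indicator {a..<a+\<eta>} x \<partial>lborel)"
proof -
  define C where "C = \<bar>c\<bar>"
  have Cpos: "C > 0" using cb kap by (simp add: C_def)
  have tauC: "\<tau> \<le> \<epsilon> * C" using tau cb eps by (simp add: C_def mult_left_mono)
  have tau0: "0 \<le> \<tau>" using tau eps kap by simp
  have ct: "C - \<tau> \<ge> \<kappa> / 2"
  proof -
    have "\<tau> \<le> \<kappa> / 2" using tau eps kap by (simp add: mult_right_mono)
    then show ?thesis using cb by (simp add: C_def)
  qed
  have ctp: "C - \<tau> > 0" using ct kap by linarith
  have Cp: "C_const p > 0" by (rule C_const_pos[OF p])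
  have s2: "\<sigma> * \<sigma> = 1" using sig by auto
  define g where "g x = \<sigma> * u x / \<delta>" for x
  define g' where "g' x = \<sigma> * u' x / \<delta>" for x
  have eqH: "Hf p (frac (u x / \<delta>)) = Hf p (frac (g x))" for x
    using sig by (auto simp: g_def Hf_frac_neg)
  have derg: "(g has_real_derivative g' x) (at x)" if "x \<in> {a..a+\<eta>}" for x
    unfolding g_def g'_def using der[of x] on[OF that] d by (auto intro!: derivative_eq_intros)
  have cg: "continuous_on {a..a+\<eta>} g'"
  proof -
    have "{a..a+\<eta>} \<subseteq> -S" using on by auto
    then have "continuous_on {a..a+\<eta>} u'" using cu' by (rule continuous_on_subset[rotated])
    then show ?thesis unfolding g'_def using d by (intro continuous_intros) auto
  qed
  have mpos: "(C - \<tau>) / \<delta> > 0" using ctp d by simp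
  have gm: "g' x \<ge> (C - \<tau>) / \<delta>" if "x \<in> {a..a+\<eta>}" for x
    using on[OF that] d by (simp add: g'_def C_def divide_right_mono)
  have H: "(\<integral>\<^sup>+x. ennreal (Hf p (frac (u x / \<delta>))) * indicator {a..<a+\<eta>} x \<partial>lborel)
     \<le> ennreal ((g (a+\<eta>) - g a + 2) / ((C - \<tau>) / \<delta>) * (2 * C_const p))"
    by (rule hint_bound[OF p eta derg cg mpos gm eqH])
  define \<Delta> where "\<Delta> = \<sigma> * u (a+\<eta>) - \<sigma> * u a"
  have gdiff: "(g (a+\<eta>) - g a + 2) / ((C - \<tau>) / \<delta>) = (\<Delta> + 2 * \<delta>) / (C - \<tau>)"
    using d ctp by (simp add: g_def \<Delta>_def field_simps)
  have D: "\<Delta> \<le> (C + \<tau>) * \<eta>"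
  proof -
    have "(\<lambda>x. \<sigma> * u x) (a+\<eta>) - (\<lambda>x. \<sigma> * u x) a \<le> (C + \<tau>) * (a + \<eta> - a)"
    proof (rule incr_le[OF S])
      show "((\<lambda>x. \<sigma> * u x) has_real_derivative \<sigma> * u' x) (at x)" if "x \<notin> S" for x
        using der[OF that] by (auto intro!: derivative_eq_intros)
      show "continuous_on UNIV (\<lambda>x. \<sigma> * u x)" using cont by (intro continuous_intros)
      show "\<sigma> * u' t \<le> C + \<tau>" if "t \<in> {a..a+\<eta>}" "t \<notin> S" for t using on[OF that(1)] by (simp add: C_def)
    qed (use eta Cpos tau0 in auto)
    then show ?thesis by (simp add: \<Delta>_def)
  qed
  have GR: "(C + \<tau>) powr p / p * ((\<Delta> + 2 * \<delta>) / (C - \<tau>) * (2 * C_const p))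
    \<le> 2 * C_const p / p * ((1 + \<epsilon>) / (1 - \<epsilon>)) powr (p + 1) * (\<eta> * (C - \<tau>) powr p)
      + 2 * C_const p / p * ((C + \<tau>) powr p * (2 * \<delta>) / (C - \<tau>))"
    by (rule good_real[OF Cpos eps(1) _ tau0 tauC eta D d p Cp]) (use eps in auto)
  have small: "(C + \<tau>) powr p * (2 * \<delta>) / (C - \<tau>) \<le> (L + 1) powr p * (2 * \<delta>) / (\<kappa> / 2)"
  proof -
    have "(C + \<tau>) powr p \<le> (L + 1) powr p" using cb Cpos tau0 p by (intro powr_mono2) (auto simp: C_def)
    then have "(C + \<tau>) powr p * (2 * \<delta>) \<le> (L + 1) powr p * (2 * \<delta>)" using d by simp
    then show ?thesis using ct kap d by (meson frac_le mult_nonneg_nonneg powr_ge_zero less_eq_real_def zero_less_divide_iff zero_less_numeral divide_pos_pos order_trans)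
  qed
  have Jc: "ennreal (\<eta> * (C - \<tau>) powr p) \<le> (\<integral>\<^sup>+x. ennreal (\<bar>u' x\<bar> powr p) * indicator {a..<a+\<eta>} x \<partial>lborel)"
  proof -
    have "ennreal (\<eta> * (C - \<tau>) powr p) = (\<integral>\<^sup>+x. ennreal ((C - \<tau>) powr p) * indicator {a..<a+\<eta>} x \<partial>lborel)"
      using eta by (simp add: nn_integral_cmult_indicator ennreal_mult'' mult.commute)
    also have "\<dots> \<le> (\<integral>\<^sup>+x. ennreal (\<bar>u' x\<bar> powr p) * indicator {a..<a+\<eta>} x \<partial>lborel)"
    proof (intro nn_integral_mono)
      fix x show "ennreal ((C - \<tau>) powr p) * indicator {a..<a+\<eta>} x \<le> ennreal (\<bar>u' x\<bar> powr p) * indicator {a..<a+\<eta>} x"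
      proof (cases "x \<in> {a..<a+\<eta>}")
        case True
        then have "C - \<tau> \<le> \<sigma> * u' x" using on[of x] by (auto simp: C_def)
        also have "\<sigma> * u' x \<le> \<bar>u' x\<bar>" using sig by auto
        finally have "(C - \<tau>) powr p \<le> \<bar>u' x\<bar> powr p" using ctp p by (intro powr_mono2) auto
        then show ?thesis using True by (simp add: ennreal_leI)
      qed simp
    qed
    finally show ?thesis .
  qed
  have "ennreal ((\<bar>c\<bar> + \<tau>) powr p / p) * (\<integral>\<^sup>+x. ennreal (Hf p (frac (u x / \<delta>))) * indicator {a..<a+\<eta>} x \<partial>lborel)
     \<le> ennreal ((C + \<tau>) powr p / p) * ennreal ((\<Delta> + 2 * \<delta>) / (C - \<tau>) * (2 * C_const p))"
  proof -
    have H': "(\<integral>\<^sup>+x. ennreal (Hf p (frac (u x / \<delta>))) * indicator {a..<a+\<eta>} x \<partial>lborel)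
     \<le> ennreal ((\<Delta> + 2 * \<delta>) / (C - \<tau>) * (2 * C_const p))" using H by (simp only: gdiff)
    show ?thesis using H' unfolding C_def by (intro mult_left_mono) auto
  qed
  also have "\<dots> = ennreal ((C + \<tau>) powr p / p * ((\<Delta> + 2 * \<delta>) / (C - \<tau>) * (2 * C_const p)))"
    using p by (subst ennreal_mult'[symmetric]) auto
  also have "\<dots> \<le> ennreal (2 * C_const p / p * ((1 + \<epsilon>) / (1 - \<epsilon>)) powr (p + 1) * (\<eta> * (C - \<tau>) powr p)
      + 2 * C_const p / p * ((L + 1) powr p * (2 * \<delta>) / (\<kappa> / 2)))"
    using GR small Cp p by (intro ennreal_leI) (smt (verit) divide_nonneg_nonneg mult_left_mono)
  also have "\<dots> = ennreal (2 * C_const p / p * ((1 + \<epsilon>) / (1 - \<epsilon>)) powr (p + 1)) * ennreal (\<eta> * (C - \<tau>) powr p)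
      + ennreal (2 * C_const p / p * ((L + 1) powr p * (2 * \<delta>) / (\<kappa> / 2)))"
    using Cp p eta kap d by (simp add: ennreal_plus[symmetric] ennreal_mult[symmetric] del: ennreal_plus)
  also have "\<dots> \<le> ennreal (2 * C_const p / p * ((1 + \<epsilon>) / (1 - \<epsilon>)) powr (p + 1)) * (\<integral>\<^sup>+x. ennreal (\<bar>u' x\<bar> powr p) * indicator {a..<a+\<eta>} x \<partial>lborel)
      + ennreal (2 * C_const p / p * ((L + 1) powr p * (2 * \<delta>) / (\<kappa> / 2)))"
    using Jc by (intro add_mono mult_left_mono) auto
  finally show ?thesis by (simp add: add.commute)
qed

lemma main_bound:
  fixes p L R \<rho> \<kappa> \<epsilon> \<eta> \<delta> A0 Jr :: real and n :: nat and u u' :: "real \<Rightarrow> real" and S :: "real set"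
  assumes p: "p \<ge> 1" and S: "finite S"
    and der: "\<And>x. x \<notin> S \<Longrightarrow> (u has_real_derivative u' x) (at x)"
    and cu': "continuous_on (-S) u'" and cont: "continuous_on UNIV u"
    and Lb: "\<And>x. x \<notin> S \<Longrightarrow> \<bar>u' x\<bar> \<le> L" and L: "L \<ge> 1"
    and supp: "\<And>x. u x \<noteq> 0 \<Longrightarrow> \<bar>x\<bar> \<le> R" and R: "R > 0"
    and eta: "0 < \<eta>" "\<eta> \<le> 1/2"
    and A0: "A0 = -R-1" and cov: "R + 1 < A0 + real n * \<eta>" "A0 + real n * \<eta> \<le> R + 2"
    and rho: "\<rho> > 0" and kap: "0 < \<kappa>" "\<kappa> \<le> 1" and eps: "0 < \<epsilon>" "\<epsilon> \<le> 1/2"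
    and uc: "\<And>t t'. \<bar>t\<bar> \<le> R+3 \<Longrightarrow> (\<forall>s\<in>S. \<rho> < \<bar>t - s\<bar>) \<Longrightarrow> \<bar>t'\<bar> \<le> R+3 \<Longrightarrow> (\<forall>s\<in>S. \<rho> < \<bar>t' - s\<bar>)
       \<Longrightarrow> \<bar>t - t'\<bar> < 3*\<eta> \<Longrightarrow> \<bar>u' t - u' t'\<bar> \<le> \<epsilon>*\<kappa>"
    and d: "0 < \<delta>" "\<delta> \<le> 1"
    and J: "(\<integral>\<^sup>+x. ennreal (\<bar>u' x\<bar> powr p) \<partial>lborel) = ennreal Jr" and Jr0: "Jr \<ge> 0"
  shows "Lambda \<delta> p (S_floor \<delta> u) \<le> ennreal (4*R*\<delta> powr p/p
     + real n * (4*(\<delta> powr p*\<eta> powr (-p))/p*\<eta>)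
     + real (card S) * (2*(\<rho>+2*\<eta>)/\<eta> + 1) * (4*L powr p*\<eta>/p)
     + real n * (2*(2*\<kappa>) powr p/p*(2*\<eta>) + 2*C_const p/p*((L+1) powr p*(2*\<delta>)/(\<kappa>/2)))
     + 2*C_const p/p*((1+\<epsilon>)/(1-\<epsilon>)) powr (p+1) * Jr)"
proof -
  have p0: "p > 0" using p by simp
  have Cp: "C_const p > 0" by (rule C_const_pos[OF p])
  define \<tau> where "\<tau> = \<epsilon> * \<kappa>"
  have t2: "\<epsilon> * \<kappa> \<le> 1/2 * \<kappa>" using eps kap by (intro mult_right_mono) auto
  have tau: "0 < \<tau>" "\<tau> \<le> \<kappa>/2" "\<tau> \<le> 1"
    using eps kap t2 unfolding \<tau>_def by (simp, linarith, linarith)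
  define a where "a i = A0 + real i * \<eta>" for i :: nat
  define cell where "cell i = {a i..<a i + \<eta>}" for i
  define c where "c i = u' (a i)" for i
  define near where "near i = (\<exists>s\<in>S. \<bar>a i - s\<bar> \<le> \<rho> + 2*\<eta>)" for i
  define PP where "PP i = (if near i then L else if \<bar>c i\<bar> < \<kappa> then \<kappa>+\<tau> else if c i > 0 then \<bar>c i\<bar> + \<tau> else 0)" for i
  define QQ where "QQ i = (if near i then L else if \<bar>c i\<bar> < \<kappa> then \<kappa>+\<tau> else if c i > 0 then 0 else \<bar>c i\<bar> + \<tau>)" for i
  define W where "W i = PP i powr p + QQ i powr p" for i
  define h where "h x = Hf p (frac (u x / \<delta>))" for x
  define e0 where "e0 = 4*(\<delta> powr p*\<eta> powr (-p))/p"
  define B where "B i x = ennreal ((4 * (\<delta> powr p * \<eta> powr (-p)) + W i * h x) / p)" for i x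
  define Cov where "Cov = {A0..<A0 + real n * \<eta>}"
  define tl where "tl x = ennreal (2*R*(\<delta> powr p * (\<bar>x\<bar> - R) powr (-1-p)))" for x
  define F where "F x = (\<integral>\<^sup>+y. indicator {y. \<bar>S_floor \<delta> u y - S_floor \<delta> u x\<bar> > \<delta>} y
      * ennreal (\<delta> powr p / \<bar>y - x\<bar> powr (1+p)) \<partial>lborel)" for x
  have PQnn: "PP i \<ge> 0" "QQ i \<ge> 0" for i using L kap tau by (auto simp: PP_def QQ_def)
  have nonnear: "\<bar>t\<bar> \<le> R+3 \<and> (\<forall>s\<in>S. \<rho> < \<bar>t - s\<bar>)"
    if i: "i < n" and nn: "\<not> near i" and t: "t \<in> {a i - \<eta> .. a i + 2*\<eta>}" for i t
  proof -
    have "a i \<ge> A0" using eta by (simp add: a_def)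
    moreover have "a i + \<eta> \<le> A0 + real n * \<eta>"
    proof -
      have "real i + 1 \<le> real n" using i by simp
      then have "(real i + 1) * \<eta> \<le> real n * \<eta>" using eta by (intro mult_right_mono) auto
      then show ?thesis by (simp add: a_def algebra_simps)
    qed
    ultimately have "\<bar>t\<bar> \<le> R+3" using t cov A0 eta by auto
    moreover have "\<rho> < \<bar>t - s\<bar>" if "s \<in> S" for s
      using nn that t unfolding near_def by force
    ultimately show ?thesis by blast
  qed
  have aK: "\<bar>a i\<bar> \<le> R+3 \<and> (\<forall>s\<in>S. \<rho> < \<bar>a i - s\<bar>)" if "i < n" "\<not> near i" for i
    using nonnear[OF that, of "a i"] eta by auto
  have osc: "\<bar>u' t - c i\<bar> \<le> \<tau> \<and> t \<notin> S" if i: "i < n" "\<not> near i" and t: "t \<in> {a i - \<eta> .. a i + 2*\<eta>}" for i t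
  proof -
    have K: "\<bar>t\<bar> \<le> R+3 \<and> (\<forall>s\<in>S. \<rho> < \<bar>t - s\<bar>)" by (rule nonnear[OF i t])
    have "\<bar>t - a i\<bar> < 3*\<eta>" using t eta by auto
    then have "\<bar>u' t - c i\<bar> \<le> \<tau>" unfolding c_def \<tau>_def using uc K aK[OF i] by blast
    moreover have "t \<notin> S" using K rho by force
    ultimately show ?thesis by blast
  qed
  have Fcell: "F x \<le> B i x" if i: "i < n" and x: "x \<in> cell i" for i x
    unfolding F_def B_def h_def W_def
  proof (rule pointwise[OF S der cont d(1) p0 eta(1) PQnn])
    fix t assume t: "t \<in> {x - \<eta>..x + \<eta>}" "t \<notin> S"
    have tE: "t \<in> {a i - \<eta> .. a i + 2*\<eta>}" using t x by (auto simp: cell_def)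
    show "- QQ i \<le> u' t \<and> u' t \<le> PP i"
    proof (cases "near i")
      case True then show ?thesis using Lb[OF t(2)] by (auto simp: PP_def QQ_def)
    next
      case False
      note o = osc[OF i False tE]
      then show ?thesis using False tau kap by (auto simp: PP_def QQ_def)
    qed
  qed
  have covR: "\<bar>x\<bar> > R + 1" if "x \<notin> Cov" for x
    using that cov A0 by (auto simp: Cov_def)
  have Ftail: "F x \<le> tl x" if x: "x \<notin> Cov" for x
  proof -
    have xR: "\<bar>x\<bar> - R \<ge> 1" using covR[OF x] by simp
    have ux: "u x = 0" using supp[of x] covR[OF x] by force
    define K where "K = \<delta> powr p * (\<bar>x\<bar> - R) powr (-1-p)"
    have "F x \<le> (\<integral>\<^sup>+y. ennreal K * indicator {-R..R} y \<partial>lborel)"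
      unfolding F_def
    proof (intro nn_integral_mono)
      fix y
      show "indicator {y. \<delta> < \<bar>S_floor \<delta> u y - S_floor \<delta> u x\<bar>} y * ennreal (\<delta> powr p / \<bar>y - x\<bar> powr (1 + p))
         \<le> ennreal K * indicator {-R..R} y"
      proof (cases "\<delta> < \<bar>S_floor \<delta> u y - S_floor \<delta> u x\<bar>")
        case True
        have "u y \<noteq> 0"
        proof
          assume "u y = 0" then show False using True ux d by (simp add: S_floor_def)
        qed
        then have y: "\<bar>y\<bar> \<le> R" using supp by blast
        have yx: "\<bar>x\<bar> - R \<le> \<bar>y - x\<bar>" using y by linarith
        have "\<delta> powr p / \<bar>y - x\<bar> powr (1 + p) \<le> \<delta> powr p / (\<bar>x\<bar> - R) powr (1 + p)"
          using yx xR p by (intro divide_left_mono powr_mono2 mult_pos_pos) auto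
        also have "\<dots> = K" unfolding K_def using powr_minus[of "\<bar>x\<bar> - R" "1+p"] by (simp add: divide_inverse)
        moreover have "y \<in> {-R..R}" using y by auto
        ultimately show ?thesis using True by (simp add: ennreal_leI)
      qed simp
    qed
    also have "\<dots> = ennreal K * ennreal (2 * R)"
      using R by (simp add: nn_integral_cmult_indicator)
    also have "\<dots> = tl x" unfolding tl_def K_def using R d
      by (simp add: ennreal_mult[symmetric] mult_ac)
    finally show ?thesis .
  qed
  have tlint: "(\<integral>\<^sup>+x. tl x * indicator (-Cov) x \<partial>lborel) \<le> ennreal (4*R*\<delta> powr p/p)"
  proof -
    have "(\<integral>\<^sup>+x. tl x * indicator (-Cov) x \<partial>lborel)
      \<le> (\<integral>\<^sup>+x. ennreal (2*R*\<delta> powr p) * (indicator {R+1..} x * ennreal ((x-R) powr (-1-p)))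
          + ennreal (2*R*\<delta> powr p) * (indicator {..-R-1} x * ennreal ((-R-x) powr (-1-p))) \<partial>lborel)"
    proof (intro nn_integral_mono)
      fix x
      show "tl x * indicator (-Cov) x \<le> ennreal (2*R*\<delta> powr p) * (indicator {R+1..} x * ennreal ((x-R) powr (-1-p)))
          + ennreal (2*R*\<delta> powr p) * (indicator {..-R-1} x * ennreal ((-R-x) powr (-1-p)))"
      proof (cases "x \<in> Cov")
        case False
        then have "\<bar>x\<bar> > R+1" by (rule covR)
        then consider "x > R+1" | "x < -R-1" by linarith
        then show ?thesis
        proof cases
          case 1
          then have "tl x = ennreal (2*R*\<delta> powr p) * ennreal ((x-R) powr (-1-p))"
            unfolding tl_def using R d by (simp add: ennreal_mult[symmetric] mult_ac)
          then show ?thesis using 1 False by (simp add: indicator_def)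
        next
          case 2
          then have ax: "\<bar>x\<bar> - R = -R-x" using R by simp
          have "tl x = ennreal (2*R*\<delta> powr p) * ennreal ((-R-x) powr (-1-p))"
            unfolding tl_def ax using R d by (simp add: ennreal_mult[symmetric] mult_ac)
          then show ?thesis using 2 False by (simp add: indicator_def)
        qed
      qed simp
    qed
    also have "\<dots> = ennreal (2*R*\<delta> powr p) * (\<integral>\<^sup>+x. indicator {R+1..} x * ennreal ((x-R) powr (-1-p)) \<partial>lborel)
        + ennreal (2*R*\<delta> powr p) * (\<integral>\<^sup>+x. indicator {..-R-1} x * ennreal ((-R-x) powr (-1-p)) \<partial>lborel)"
      by (simp add: nn_integral_add nn_integral_cmult)
    also have "\<dots> = ennreal (2*R*\<delta> powr p) * ennreal (1/p) + ennreal (2*R*\<delta> powr p) * ennreal (1/p)"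
      using tail_int_right[of 1 p R] tail_int_left[of 1 p "-R"] p0 by simp
    also have "\<dots> = ennreal (4*R*\<delta> powr p/p)"
      using R d p0 by (simp add: ennreal_mult[symmetric] ennreal_plus[symmetric] del: ennreal_plus)
    finally show ?thesis .
  qed
  have cellidx: "i = nat \<lfloor>(x - A0) / \<eta>\<rfloor>" if "x \<in> cell i" for x i
  proof -
    have "real i \<le> (x - A0) / \<eta>" "(x - A0) / \<eta> < real i + 1"
      using that eta by (auto simp: cell_def a_def field_simps)
    then have "\<lfloor>(x - A0) / \<eta>\<rfloor> = int i" by linarith
    then show ?thesis by simp
  qed
  have incov: "\<exists>i<n. x \<in> cell i" if "x \<in> Cov" for x
  proof -
    define i where "i = nat \<lfloor>(x - A0) / \<eta>\<rfloor>"
    have x0: "(x - A0) / \<eta> \<ge> 0" "(x - A0) / \<eta> < real n" using that eta by (auto simp: Cov_def field_simps)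
    then have ri: "real i = of_int \<lfloor>(x - A0) / \<eta>\<rfloor>" by (simp add: i_def)
    have "real i \<le> (x - A0) / \<eta>" "(x - A0) / \<eta> < real i + 1" using ri by linarith+
    then have "x \<in> cell i" using eta by (auto simp: cell_def a_def field_simps)
    moreover have "i < n" using ri x0 by linarith
    ultimately show ?thesis by blast
  qed
  have hm: "h \<in> borel_measurable borel" unfolding h_def by (rule meas_h[OF cont])
  have Bm: "(\<lambda>x. B i x * indicator (cell i) x) \<in> borel_measurable borel" for i
    using hm unfolding B_def cell_def by measurable
  have tlm: "(\<lambda>x. tl x * indicator (-Cov) x) \<in> borel_measurable borel"
    unfolding tl_def Cov_def by measurable
  have Fpt: "F x \<le> (\<Sum>i<n. B i x * indicator (cell i) x) + tl x * indicator (-Cov) x" for x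
  proof (cases "x \<in> Cov")
    case True
    then obtain i where i: "i < n" "x \<in> cell i" using incov by blast
    have "F x \<le> B i x * indicator (cell i) x" using Fcell[OF i] i by simp
    also have "\<dots> \<le> (\<Sum>i<n. B i x * indicator (cell i) x)" by (rule member_le_sum) (use i in auto)
    finally show ?thesis by (simp add: add_increasing2)
  next
    case False then show ?thesis using Ftail[OF False] by (simp add: add_increasing)
  qed
  have Lam: "Lambda \<delta> p (S_floor \<delta> u) \<le> (\<Sum>i<n. (\<integral>\<^sup>+x. B i x * indicator (cell i) x \<partial>lborel)) + ennreal (4*R*\<delta> powr p/p)"
  proof -
    have "Lambda \<delta> p (S_floor \<delta> u) = (\<integral>\<^sup>+x. F x \<partial>lborel)" unfolding F_def by (rule Lambda_iter[OF cont])
    also have "\<dots> \<le> (\<integral>\<^sup>+x. (\<Sum>i<n. B i x * indicator (cell i) x) + tl x * indicator (-Cov) x \<partial>lborel)"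
      by (rule nn_integral_mono) (rule Fpt)
    also have "\<dots> = (\<integral>\<^sup>+x. (\<Sum>i<n. B i x * indicator (cell i) x) \<partial>lborel) + (\<integral>\<^sup>+x. tl x * indicator (-Cov) x \<partial>lborel)"
    proof (rule nn_integral_add)
      show "(\<lambda>x. \<Sum>i<n. B i x * indicator (cell i) x) \<in> borel_measurable lborel"
        using Bm by (intro borel_measurable_sum) simp
    qed (use tlm in simp)
    also have "(\<integral>\<^sup>+x. (\<Sum>i<n. B i x * indicator (cell i) x) \<partial>lborel) = (\<Sum>i<n. (\<integral>\<^sup>+x. B i x * indicator (cell i) x \<partial>lborel))"
      by (rule nn_integral_sum) (use Bm in auto)
    finally show ?thesis using tlint by (meson add_left_mono order_trans)
  qed
  define good where "good i = (\<not> near i \<and> \<kappa> \<le> \<bar>c i\<bar>)" for i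
  define Lc where "Lc = 2*C_const p/p*((1+\<epsilon>)/(1-\<epsilon>)) powr (p+1)"
  define Jc where "Jc i = (\<integral>\<^sup>+x. ennreal (\<bar>u' x\<bar> powr p) * indicator (cell i) x \<partial>lborel)" for i
  define eG where "eG = 2*C_const p/p*((L+1) powr p*(2*\<delta>)/(\<kappa>/2))"
  define rr where "rr i = (if near i then 4*L powr p*\<eta>/p else 2*(2*\<kappa>) powr p/p*(2*\<eta>) + eG)" for i
  define Hi where "Hi i = (\<integral>\<^sup>+x. ennreal (h x) * indicator (cell i) x \<partial>lborel)" for i
  have e0nn: "e0 \<ge> 0" using p0 by (simp add: e0_def)
  have Wnn: "W i \<ge> 0" for i by (simp add: W_def)
  have hnn: "h x \<ge> 0" for x by (simp add: h_def Hf_nonneg)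
  have eGnn: "eG \<ge> 0" unfolding eG_def using Cp p0 kap d by (intro mult_nonneg_nonneg divide_nonneg_nonneg) auto
  have rrnn: "rr i \<ge> 0" for i using p0 eGnn kap eta by (simp add: rr_def)
  have hm': "(\<lambda>x. ennreal (h x) * indicator (cell i) x) \<in> borel_measurable borel" for i
    using hm unfolding cell_def by measurable
  have Bsplit: "(\<integral>\<^sup>+x. B i x * indicator (cell i) x \<partial>lborel) = ennreal (e0 * \<eta>) + ennreal (W i / p) * Hi i" for i
  proof -
    have "(\<integral>\<^sup>+x. B i x * indicator (cell i) x \<partial>lborel)
       = (\<integral>\<^sup>+x. ennreal e0 * indicator (cell i) x + ennreal (W i / p) * (ennreal (h x) * indicator (cell i) x) \<partial>lborel)"
    proof (intro nn_integral_cong)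
      fix x
      have "(4 * (\<delta> powr p * \<eta> powr (-p)) + W i * h x) / p = e0 + W i / p * h x"
        by (simp add: e0_def add_divide_distrib)
      then have "B i x = ennreal e0 + ennreal (W i / p) * ennreal (h x)"
      proof -
        have "0 \<le> W i / p * h x" using Wnn hnn p0 by simp
        then have "ennreal (e0 + W i / p * h x) = ennreal e0 + ennreal (W i / p * h x)" using e0nn by (simp add: ennreal_plus)
        also have "ennreal (W i / p * h x) = ennreal (W i / p) * ennreal (h x)" using Wnn hnn p0 by (intro ennreal_mult) auto
        finally show ?thesis unfolding B_def using \<open>(4 * (\<delta> powr p * \<eta> powr (-p)) + W i * h x) / p = e0 + W i / p * h x\<close> by simp
      qed
      then show "B i x * indicator (cell i) x = ennreal e0 * indicator (cell i) x + ennreal (W i / p) * (ennreal (h x) * indicator (cell i) x)"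
        by (simp add: distrib_right distrib_left mult_ac)
    qed
    also have "\<dots> = (\<integral>\<^sup>+x. ennreal e0 * indicator (cell i) x \<partial>lborel) + ennreal (W i / p) * Hi i"
      unfolding Hi_def using hm'[of i]
      by (subst nn_integral_add) (auto simp: nn_integral_cmult cell_def)
    also have "(\<integral>\<^sup>+x. ennreal e0 * indicator (cell i) x \<partial>lborel) = ennreal (e0 * \<eta>)"
      using eta e0nn by (simp add: nn_integral_cmult_indicator cell_def ennreal_mult)
    finally show ?thesis .
  qed
  have Hi2: "Hi i \<le> ennreal (2 * \<eta>)" for i
  proof -
    have "Hi i \<le> (\<integral>\<^sup>+x. ennreal 2 * indicator (cell i) x \<partial>lborel)"
      unfolding Hi_def h_def
    proof (intro nn_integral_mono)
      fix x
      have "Hf p (frac (u x / \<delta>)) \<le> 2" using Hf_frac_le2 p0 by simp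
      then have "ennreal (Hf p (frac (u x / \<delta>))) \<le> ennreal 2" by (rule ennreal_leI)
      then show "ennreal (Hf p (frac (u x / \<delta>))) * indicator (cell i) x \<le> ennreal 2 * indicator (cell i) x"
        by (auto simp: indicator_def)
    qed
    also have "\<dots> = ennreal (2 * \<eta>)" using eta by (simp add: nn_integral_cmult_indicator cell_def ennreal_mult)
    finally show ?thesis .
  qed
  have cellb: "(\<integral>\<^sup>+x. B i x * indicator (cell i) x \<partial>lborel) \<le> ennreal (e0 * \<eta> + rr i) + (if good i then ennreal Lc * Jc i else 0)"
    if i: "i < n" for i
  proof -
    have main: "ennreal (W i / p) * Hi i \<le> ennreal (rr i) + (if good i then ennreal Lc * Jc i else 0)"
    proof (cases "near i")
      case True
      then have "W i = 2 * L powr p" by (simp add: W_def PP_def QQ_def)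
      then have "ennreal (W i / p) * Hi i \<le> ennreal (2 * L powr p / p) * ennreal (2 * \<eta>)"
        using Hi2[of i] by (simp add: mult_left_mono)
      also have "\<dots> = ennreal (rr i)" using True p0 eta by (simp add: rr_def ennreal_mult[symmetric])
      finally show ?thesis using True by (simp add: good_def)
    next
      case nn: False
      show ?thesis
      proof (cases "\<bar>c i\<bar> < \<kappa>")
        case True
        then have Wi: "W i = 2 * (\<kappa> + \<tau>) powr p" using nn by (simp add: W_def PP_def QQ_def)
        have "(\<kappa> + \<tau>) powr p \<le> (2*\<kappa>) powr p" using tau kap p0 by (intro powr_mono2) auto
        then have "W i / p \<le> 2*(2*\<kappa>) powr p/p" unfolding Wi using p0 by (simp add: divide_right_mono)
        then have "ennreal (W i / p) * Hi i \<le> ennreal (2*(2*\<kappa>) powr p/p) * ennreal (2 * \<eta>)"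
          using Hi2 by (intro mult_mono) (auto intro: ennreal_leI)
        also have "\<dots> = ennreal (2*(2*\<kappa>) powr p/p*(2*\<eta>))" using p0 eta by (simp add: ennreal_mult[symmetric])
        also have "\<dots> \<le> ennreal (rr i)" using nn eGnn by (simp add: rr_def ennreal_leI)
        finally show ?thesis by (simp add: add_increasing2)
      next
        case False
        then have gd: "good i" using nn by (simp add: good_def)
        define \<sigma> where "\<sigma> = (if c i > 0 then 1 else (-1::real))"
        have Wi: "W i = (\<bar>c i\<bar> + \<tau>) powr p" using nn False by (auto simp: W_def PP_def QQ_def)
        have aS: "a i \<notin> S" using aK[OF i nn] rho by force
        have on: "t \<notin> S \<and> \<bar>c i\<bar> - \<tau> \<le> \<sigma> * u' t \<and> \<sigma> * u' t \<le> \<bar>c i\<bar> + \<tau>" if t: "t \<in> {a i..a i + \<eta>}" for t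
        proof -
          have "t \<in> {a i - \<eta> .. a i + 2*\<eta>}" using t eta by auto
          note o = osc[OF i nn this]
          then show ?thesis using False kap by (auto simp: \<sigma>_def abs_if split: if_splits)
        qed
        have "ennreal ((\<bar>c i\<bar> + \<tau>) powr p / p) * (\<integral>\<^sup>+x. ennreal (Hf p (frac (u x / \<delta>))) * indicator {a i..<a i+\<eta>} x \<partial>lborel)
          \<le> ennreal eG + ennreal Lc * (\<integral>\<^sup>+x. ennreal (\<bar>u' x\<bar> powr p) * indicator {a i..<a i+\<eta>} x \<partial>lborel)"
          unfolding eG_def Lc_def
        proof (rule cell_good[OF p S der cu' cont _ eta(1) d(1) eps kap(1) \<tau>_def])
          show "\<sigma> = 1 \<or> \<sigma> = - 1" by (simp add: \<sigma>_def)
          show "\<kappa> \<le> \<bar>c i\<bar>" using False by simp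
          show "\<bar>c i\<bar> \<le> L" using Lb[OF aS] by (simp add: c_def)
          show "\<tau> \<le> 1" by (rule tau(3))
        qed (use on in auto)
        then have "ennreal (W i / p) * Hi i \<le> ennreal eG + ennreal Lc * Jc i"
          by (simp add: Wi Hi_def Jc_def h_def cell_def)
        also have "\<dots> \<le> ennreal (rr i) + ennreal Lc * Jc i"
          using nn kap p0 eta by (intro add_right_mono ennreal_leI) (simp add: rr_def)
        finally show ?thesis using gd by simp
      qed
    qed
    have "(\<integral>\<^sup>+x. B i x * indicator (cell i) x \<partial>lborel) \<le> ennreal (e0 * \<eta>) + (ennreal (rr i) + (if good i then ennreal Lc * Jc i else 0))"
      unfolding Bsplit by (intro add_left_mono main)
    also have "\<dots> = ennreal (e0 * \<eta> + rr i) + (if good i then ennreal Lc * Jc i else 0)"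
      using e0nn eta rrnn by (simp add: ennreal_plus[symmetric] add.assoc del: ennreal_plus)
    finally show ?thesis .
  qed
  have u'm: "u' \<in> borel_measurable borel"
  proof -
    have "(\<lambda>x. if x \<in> -S then u' x else u' x) \<in> borel_measurable borel"
    proof (rule borel_measurable_continuous_on_if)
      show "- S \<in> sets borel" using S by (intro borel_open open_Compl finite_imp_closed)
      show "continuous_on (- S) u'" by (rule cu')
      show "continuous_on (- (- S)) u'" using S by (simp add: continuous_on_finite)
    qed
    then show ?thesis by simp
  qed
  have fm: "(\<lambda>x. ennreal (\<bar>u' x\<bar> powr p) * indicator (cell i) x) \<in> borel_measurable borel" for i
    using u'm unfolding cell_def by measurable
  have sumJ: "(\<Sum>i<n. Jc i) \<le> ennreal Jr"
  proof -
    have "(\<Sum>i<n. Jc i) = (\<integral>\<^sup>+x. (\<Sum>i<n. ennreal (\<bar>u' x\<bar> powr p) * indicator (cell i) x) \<partial>lborel)"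
      unfolding Jc_def by (rule nn_integral_sum[symmetric]) (use fm in auto)
    also have "\<dots> \<le> (\<integral>\<^sup>+x. ennreal (\<bar>u' x\<bar> powr p) \<partial>lborel)"
    proof (intro nn_integral_mono)
      fix x
      define k where "k = nat \<lfloor>(x - A0) / \<eta>\<rfloor>"
      have "(\<Sum>i<n. indicator (cell i) x :: ennreal) \<le> (\<Sum>i<n. (if i = k then 1 else 0))"
        by (intro sum_mono) (auto simp: indicator_def k_def dest: cellidx)
      also have "\<dots> \<le> 1" by simp
      finally have "(\<Sum>i<n. indicator (cell i) x :: ennreal) \<le> 1" .
      then have "ennreal (\<bar>u' x\<bar> powr p) * (\<Sum>i<n. indicator (cell i) x) \<le> ennreal (\<bar>u' x\<bar> powr p) * 1"
        by (intro mult_left_mono) auto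
      then show "(\<Sum>i<n. ennreal (\<bar>u' x\<bar> powr p) * indicator (cell i) x) \<le> ennreal (\<bar>u' x\<bar> powr p)"
        by (simp add: sum_distrib_left)
    qed
    finally show ?thesis using J by simp
  qed
  have cardN: "real (card ({..<n} \<inter> {i. near i})) \<le> real (card S) * (2*(\<rho>+2*\<eta>)/\<eta> + 1)"
  proof -
    have eq: "{..<n} \<inter> {i. near i} = (\<Union>s\<in>S. {i\<in>{..<n}. \<bar>A0 + real i * \<eta> - s\<bar> \<le> \<rho> + 2*\<eta>})"
      by (auto simp: near_def a_def)
    have "card ({..<n} \<inter> {i. near i}) \<le> (\<Sum>s\<in>S. card {i\<in>{..<n}. \<bar>A0 + real i * \<eta> - s\<bar> \<le> \<rho> + 2*\<eta>})"
      unfolding eq by (rule card_UN_le[OF S])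
    then have "real (card ({..<n} \<inter> {i. near i})) \<le> real (\<Sum>s\<in>S. card {i\<in>{..<n}. \<bar>A0 + real i * \<eta> - s\<bar> \<le> \<rho> + 2*\<eta>})"
      by (simp only: of_nat_le_iff)
    also have "\<dots> = (\<Sum>s\<in>S. real (card {i\<in>{..<n}. \<bar>A0 + real i * \<eta> - s\<bar> \<le> \<rho> + 2*\<eta>}))"
      by (rule of_nat_sum)
    also have "\<dots> \<le> (\<Sum>s\<in>S. 2*(\<rho>+2*\<eta>)/\<eta> + 1)"
      by (intro sum_mono count_near) (use eta rho in auto)
    also have "\<dots> = real (card S) * (2*(\<rho>+2*\<eta>)/\<eta> + 1)" by simp
    finally show ?thesis .
  qed
  have sumrr: "(\<Sum>i<n. e0 * \<eta> + rr i) \<le> real n * (e0 * \<eta>) + real (card S) * (2*(\<rho>+2*\<eta>)/\<eta> + 1) * (4*L powr p*\<eta>/p)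
      + real n * (2*(2*\<kappa>) powr p/p*(2*\<eta>) + eG)"
  proof -
    define A where "A = 4*L powr p*\<eta>/p"
    define X where "X = 2*(2*\<kappa>) powr p/p*(2*\<eta>) + eG"
    have A0': "A \<ge> 0" "X \<ge> 0" using p0 eta eGnn kap by (auto simp: A_def X_def)
    have "(\<Sum>i<n. e0 * \<eta> + rr i) \<le> (\<Sum>i<n. e0 * \<eta> + (of_bool (near i) * A + X))"
      by (intro sum_mono) (use A0' in \<open>auto simp: rr_def A_def X_def\<close>)
    also have "\<dots> = real n * (e0 * \<eta>) + real (card ({..<n} \<inter> {i. near i})) * A + real n * X"
      by (simp add: sum.distrib sum_distrib_right[symmetric] sum_of_bool_eq)
    also have "\<dots> \<le> real n * (e0 * \<eta>) + real (card S) * (2*(\<rho>+2*\<eta>)/\<eta> + 1) * A + real n * X"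
      using cardN A0' e0nn eta by (intro add_mono mult_right_mono) auto
    finally show ?thesis unfolding A_def X_def .
  qed
  have "Lambda \<delta> p (S_floor \<delta> u) \<le> (\<Sum>i<n. ennreal (e0 * \<eta> + rr i) + (if good i then ennreal Lc * Jc i else 0)) + ennreal (4*R*\<delta> powr p/p)"
    using Lam cellb by (meson add_right_mono order_trans sum_mono lessThan_iff)
  also have "(\<Sum>i<n. ennreal (e0 * \<eta> + rr i) + (if good i then ennreal Lc * Jc i else 0))
      \<le> (\<Sum>i<n. ennreal (e0 * \<eta> + rr i)) + ennreal Lc * (\<Sum>i<n. Jc i)"
  proof -
    have "(\<Sum>i<n. (if good i then ennreal Lc * Jc i else 0)) \<le> (\<Sum>i<n. ennreal Lc * Jc i)"
      by (intro sum_mono) auto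
    then show ?thesis by (simp add: sum.distrib sum_distrib_left add_left_mono)
  qed
  also have "(\<Sum>i<n. ennreal (e0 * \<eta> + rr i)) = ennreal (\<Sum>i<n. e0 * \<eta> + rr i)"
    using e0nn eta rrnn by (intro sum_ennreal) (simp add: add_nonneg_nonneg)
  also have "ennreal Lc * (\<Sum>i<n. Jc i) \<le> ennreal Lc * ennreal Jr" using sumJ by (intro mult_left_mono) auto
  finally have fin: "Lambda \<delta> p (S_floor \<delta> u) \<le> ennreal (\<Sum>i<n. e0 * \<eta> + rr i) + ennreal Lc * ennreal Jr + ennreal (4*R*\<delta> powr p/p)"
    by (simp add: add_right_mono)
  have Lc0: "Lc \<ge> 0" using Cp p0 eps unfolding Lc_def by (intro mult_nonneg_nonneg divide_nonneg_nonneg) auto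
  have "ennreal (\<Sum>i<n. e0 * \<eta> + rr i) + ennreal Lc * ennreal Jr + ennreal (4*R*\<delta> powr p/p)
      = ennreal ((\<Sum>i<n. e0 * \<eta> + rr i) + Lc * Jr + 4*R*\<delta> powr p/p)"
  proof -
    have s0: "0 \<le> (\<Sum>i<n. e0 * \<eta> + rr i)" by (intro sum_nonneg) (use e0nn eta rrnn in auto)
    have t0: "0 \<le> 4*R*\<delta> powr p/p" using R p0 by simp
    have m0: "0 \<le> Lc * Jr" using Lc0 Jr0 by simp
    show ?thesis
      by (simp only: ennreal_mult[OF Lc0 Jr0] ennreal_plus[OF s0 m0] ennreal_plus[OF add_nonneg_nonneg[OF s0 m0] t0])
  qed
  also have "\<dots> \<le> ennreal (4*R*\<delta> powr p/p
     + real n * (4*(\<delta> powr p*\<eta> powr (-p))/p*\<eta>)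
     + real (card S) * (2*(\<rho>+2*\<eta>)/\<eta> + 1) * (4*L powr p*\<eta>/p)
     + real n * (2*(2*\<kappa>) powr p/p*(2*\<eta>) + 2*C_const p/p*((L+1) powr p*(2*\<delta>)/(\<kappa>/2)))
     + 2*C_const p/p*((1+\<epsilon>)/(1-\<epsilon>)) powr (p+1) * Jr)"
    using sumrr by (intro ennreal_leI) (simp add: e0_def eG_def Lc_def)
  finally show ?thesis using fin by simp
qed

lemma small_powr: fixes x p :: real assumes "0 \<le> x" "x \<le> 1" "p \<ge> 1" shows "x powr p \<le> x"
proof (cases "x = 0")
  case False
  then have "x powr p \<le> x powr 1" using assms by (intro powr_mono') auto
  then show ?thesis using False assms by simp
qed simp

theorem proposition3p7:
  fixes p :: real and u u' :: "real \<Rightarrow> real" and S :: "real set"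
  assumes "p \<ge> 1"
    and "compact (closure {x. u x \<noteq> 0})"
    and "\<exists>L. L-lipschitz_on UNIV u"
    and "finite S"
    and "\<And>x. x \<notin> S \<Longrightarrow> (u has_real_derivative u' x) (at x)"
    and "continuous_on (- S) u'"
  shows "Limsup (at_right 0) (\<lambda>\<delta>. Lambda \<delta> p (S_floor \<delta> u))
           \<le> ennreal (2 / p * C_const p) * (\<integral>\<^sup>+ x. ennreal (\<bar>u' x\<bar> powr p) \<partial>lborel)"
proof -
  note p = assms(1) and S = assms(4) and der = assms(5) and cu' = assms(6)
  have p0: "p > 0" using p by simp
  have Cp: "C_const p > 0" by (rule C_const_pos[OF p])
  obtain L0 where L0: "L0-lipschitz_on UNIV u" using assms(3) by blast
  have cont: "continuous_on UNIV u" by (rule lipschitz_on_continuous_on[OF L0])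
  define L where "L = max L0 1"
  have L1: "L \<ge> 1" by (simp add: L_def)
  have Lb: "\<bar>u' x\<bar> \<le> L" if "x \<notin> S" for x
    using deriv_lip_bound[OF L0 der[OF that]] by (simp add: L_def)
  have "bounded (closure {x. u x \<noteq> 0})" using assms(2) by (rule compact_imp_bounded)
  then obtain B where B: "\<forall>x\<in>closure {x. u x \<noteq> 0}. norm x \<le> B"
    unfolding bounded_iff by blast
  define R where "R = max B 1"
  have R: "R > 0" by (simp add: R_def)
  have supp: "\<bar>x\<bar> \<le> R" if "u x \<noteq> 0" for x
  proof -
    have "x \<in> closure {x. u x \<noteq> 0}" by (rule closure_subset[THEN subsetD]) (simp add: that)
    then have "norm x \<le> B" using B by blast
    then show ?thesis by (simp add: R_def)
  qed
  define J where "J = (\<integral>\<^sup>+ x. ennreal (\<bar>u' x\<bar> powr p) \<partial>lborel)"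
  show ?thesis unfolding J_def[symmetric]
  proof (rule ennreal_le_epsilon)
    fix e :: real
    assume top: "ennreal (2 / p * C_const p) * J < top" and e: "0 < e"
    have "J < top" using top Cp p0 by (auto simp: ennreal_mult_less_top)
    then obtain Jr where J: "J = ennreal Jr" and Jr0: "Jr \<ge> 0" by (cases J) auto
    define K where "K = 2 * C_const p / p"
    have K0: "K > 0" using Cp p0 by (simp add: K_def)
    have l1: "((\<lambda>x::real. (1 + x) / (1 - x)) \<longlongrightarrow> (1 + 0) / (1 - 0)) (at_right 0)"
      by (intro tendsto_intros) auto
    have lim: "((\<lambda>\<epsilon>. K * ((1+\<epsilon>)/(1-\<epsilon>)) powr (p+1) * Jr) \<longlongrightarrow> K * 1 powr (p+1) * Jr) (at_right 0)"
      using l1 by (intro tendsto_intros) auto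
    then have "\<forall>\<^sub>F \<epsilon> in at_right 0. K * ((1+\<epsilon>)/(1-\<epsilon>)) powr (p+1) * Jr < K * Jr + e/4"
      using e by (intro order_tendstoD) auto
    moreover have "\<forall>\<^sub>F \<epsilon> in at_right (0::real). \<epsilon> < 1/2" unfolding eventually_at_right_field by (intro exI[of _ "1/2"]) auto
    ultimately have "\<forall>\<^sub>F \<epsilon> in at_right (0::real). K * ((1+\<epsilon>)/(1-\<epsilon>)) powr (p+1) * Jr < K * Jr + e/4 \<and> \<epsilon> < 1/2"
      by eventually_elim auto
    then obtain b where b: "b > 0" "\<And>\<epsilon>. 0 < \<epsilon> \<Longrightarrow> \<epsilon> < b \<Longrightarrow> K * ((1+\<epsilon>)/(1-\<epsilon>)) powr (p+1) * Jr < K * Jr + e/4 \<and> \<epsilon> < 1/2"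
      unfolding eventually_at_right_field by auto
    define \<epsilon> where "\<epsilon> = b / 2"
    have eps: "0 < \<epsilon>" "\<epsilon> \<le> 1/2" and epsJ: "K * ((1+\<epsilon>)/(1-\<epsilon>)) powr (p+1) * Jr \<le> K * Jr + e/4"
      using b(1) b(2)[of \<epsilon>] by (auto simp: \<epsilon>_def)
    define \<kappa> where "\<kappa> = min (1/4) (e * p / (32 * (2*R+3)))"
    have kap: "0 < \<kappa>" "\<kappa> \<le> 1" "\<kappa> \<le> 1/4" "\<kappa> \<le> e * p / (32 * (2*R+3))"
    proof -
      have "0 < e * p / (32 * (2*R+3))" using e p0 R by simp
      then show "0 < \<kappa>" "\<kappa> \<le> 1" "\<kappa> \<le> 1/4" "\<kappa> \<le> e * p / (32 * (2*R+3))"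
        unfolding \<kappa>_def by linarith+
    qed
    define \<rho> where "\<rho> = e * p / (64 * L powr p * (real (card S) + 1))"
    have LP: "L powr p \<ge> 1" using L1 p0 by (simp add: ge_one_powr_ge_zero)
    have rho: "\<rho> > 0" unfolding \<rho>_def using e p0 LP by (intro divide_pos_pos mult_pos_pos) auto
    define K' where "K' = {t. \<bar>t\<bar> \<le> R+3} \<inter> (\<Inter>s\<in>S. {t. \<rho>/2 \<le> \<bar>t - s\<bar>})"
    have K'c: "compact K'"
    proof -
      have "closed K'" unfolding K'_def
        by (intro closed_Int closed_INT allI ballI closed_Collect_le continuous_intros)
      moreover have "bounded K'" unfolding K'_def bounded_iff by (rule exI[of _ "R+3"]) auto
      ultimately show ?thesis by (simp add: compact_eq_bounded_closed)
    qed
    have K'S: "K' \<subseteq> -S" using rho by (force simp: K'_def)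
    have "uniformly_continuous_on K' u'"
      by (rule compact_uniformly_continuous[OF continuous_on_subset[OF cu' K'S] K'c])
    moreover have "\<epsilon> * \<kappa> > 0" using eps kap by simp
    ultimately obtain dd where dd: "dd > 0" "\<And>t t'. t \<in> K' \<Longrightarrow> t' \<in> K' \<Longrightarrow> dist t' t < dd \<Longrightarrow> dist (u' t') (u' t) < \<epsilon> * \<kappa>"
      unfolding uniformly_continuous_on_def by metis
    define \<eta> where "\<eta> = min (1/2) (min (dd/3) (e * p / (160 * L powr p * (real (card S) + 1))))"
    have eta: "0 < \<eta>" "\<eta> \<le> 1/2" "3 * \<eta> \<le> dd" "\<eta> \<le> e * p / (160 * L powr p * (real (card S) + 1))"
    proof -
      have "0 < e * p / (160 * L powr p * (real (card S) + 1))" using e p0 LP by (intro divide_pos_pos mult_pos_pos) auto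
      then show "0 < \<eta>" "\<eta> \<le> 1/2" "3 * \<eta> \<le> dd" "\<eta> \<le> e * p / (160 * L powr p * (real (card S) + 1))"
        unfolding \<eta>_def using dd by auto
    qed
    define n where "n = nat \<lceil>(2*R+2)/\<eta>\<rceil> + 1"
    define A0 where "A0 = -R-1"
    have nb: "real n \<ge> (2*R+2)/\<eta> + 1" "real n \<le> (2*R+2)/\<eta> + 2"
      using R eta by (simp_all add: n_def) linarith+
    have cov: "R + 1 < A0 + real n * \<eta>" "A0 + real n * \<eta> \<le> R + 2" "real n * \<eta> \<le> 2*R+3"
    proof -
      have "real n * \<eta> \<ge> ((2*R+2)/\<eta> + 1) * \<eta>" using nb eta by (intro mult_right_mono) auto
      also have "((2*R+2)/\<eta> + 1) * \<eta> = 2*R+2+\<eta>" using eta by (simp add: field_simps)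
      finally have 1: "real n * \<eta> \<ge> 2*R+2+\<eta>" .
      have "real n * \<eta> \<le> ((2*R+2)/\<eta> + 2) * \<eta>" using nb eta by (intro mult_right_mono) auto
      also have "((2*R+2)/\<eta> + 2) * \<eta> = 2*R+2+2*\<eta>" using eta by (simp add: field_simps)
      finally have 2: "real n * \<eta> \<le> 2*R+2+2*\<eta>" .
      show "R + 1 < A0 + real n * \<eta>" "A0 + real n * \<eta> \<le> R + 2" "real n * \<eta> \<le> 2*R+3"
        using 1 2 eta by (auto simp: A0_def)
    qed
    have uc: "\<bar>u' t - u' t'\<bar> \<le> \<epsilon>*\<kappa>"
      if "\<bar>t\<bar> \<le> R+3" "\<forall>s\<in>S. \<rho> < \<bar>t - s\<bar>" "\<bar>t'\<bar> \<le> R+3" "\<forall>s\<in>S. \<rho> < \<bar>t' - s\<bar>" "\<bar>t - t'\<bar> < 3*\<eta>" for t t'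
    proof -
      have "t \<in> K'" "t' \<in> K'" using that rho by (auto simp: K'_def)
      moreover have "dist t t' < dd" using that eta by (simp add: dist_real_def)
      ultimately have "dist (u' t) (u' t') < \<epsilon> * \<kappa>" using dd(2) by blast
      then show ?thesis by (simp add: dist_real_def)
    qed
    have errA: "real (card S) * (2*(\<rho>+2*\<eta>)/\<eta> + 1) * (4*L powr p*\<eta>/p) \<le> e/4"
    proof -
      define D where "D = L powr p * (real (card S) + 1)"
      have D: "D > 0" unfolding D_def using LP by (intro mult_pos_pos) auto
      have "real (card S) * (2*(\<rho>+2*\<eta>)/\<eta> + 1) * (4*L powr p*\<eta>/p) = real (card S) * (2*\<rho> + 5*\<eta>) * (4*L powr p/p)"
        using eta p0 by (simp add: field_simps)
      also have "\<dots> \<le> (real (card S) + 1) * (2*\<rho> + 5*\<eta>) * (4*L powr p/p)"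
        using rho eta p0 LP by (intro mult_right_mono) auto
      also have "\<dots> = 8 * \<rho> * D / p + 20 * \<eta> * D / p"
        unfolding D_def by (simp add: add_divide_distrib[symmetric] algebra_simps)
      also have "8 * \<rho> * D / p = e/8"
      proof -
        have rhoD: "\<rho> = e*p/(64*D)" by (simp add: \<rho>_def D_def mult.assoc)
        show ?thesis unfolding rhoD using p0 D by (simp add: field_simps)
      qed
      also have "20 * \<eta> * D / p \<le> 20 * (e * p / (160 * D)) * D / p"
      proof -
        have etaD: "\<eta> \<le> e*p/(160*D)" using eta(4) by (simp add: D_def mult.assoc)
        show ?thesis using etaD D p0 by (intro divide_right_mono mult_right_mono mult_left_mono) auto
      qed
      also have "\<dots> = e/8" using p0 D by (simp add: field_simps)
      finally show ?thesis by simp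
    qed
    have errB: "real n * (2*(2*\<kappa>) powr p/p*(2*\<eta>)) \<le> e/4"
    proof -
      have "(2*\<kappa>) powr p \<le> 2*\<kappa>" using kap p by (intro small_powr) auto
      then have "real n * (2*(2*\<kappa>) powr p/p*(2*\<eta>)) \<le> real n * (2*(2*\<kappa>)/p*(2*\<eta>))"
        using p0 eta by (intro mult_left_mono mult_right_mono divide_right_mono) auto
      also have "\<dots> = (real n * \<eta>) * (8 * \<kappa> / p)" by (simp add: field_simps)
      also have "\<dots> \<le> (2*R+3) * (8 * \<kappa> / p)" using cov(3) kap p0 by (intro mult_right_mono) auto
      also have "\<dots> \<le> (2*R+3) * (8 * (e * p / (32 * (2*R+3))) / p)"
        using kap p0 R by (intro mult_left_mono divide_right_mono) auto
      also have "\<dots> = e/4"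
      proof -
        have gen: "Q * (8 * (e * p / (32 * Q)) / p) = e/4" if "Q > 0" for Q using that p0 by (simp add: field_simps)
        show ?thesis by (rule gen) (use R in simp)
      qed
      finally show ?thesis .
    qed
    define M where "M = 4*R/p + real n * (4*(\<eta> powr (-p))/p*\<eta>) + real n * (2*C_const p/p*((L+1) powr p*2/(\<kappa>/2)))"
    have M0: "M \<ge> 0" unfolding M_def using R p0 eta Cp kap by (intro add_nonneg_nonneg mult_nonneg_nonneg divide_nonneg_nonneg) auto
    define b2 where "b2 = min 1 (e / (4 * (M + 1)))"
    have b2: "b2 > 0" using e M0 by (simp add: b2_def)
    have "\<forall>\<^sub>F \<delta> in at_right 0. Lambda \<delta> p (S_floor \<delta> u) \<le> ennreal (2 / p * C_const p) * J + ennreal e"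
      unfolding eventually_at_right_field
    proof (intro exI[of _ b2] conjI allI impI)
      show "b2 > 0" by (rule b2)
      fix \<delta> :: real assume d: "0 < \<delta>" "\<delta> < b2"
      have d1: "\<delta> \<le> 1" using d by (simp add: b2_def)
      have dp: "\<delta> powr p \<le> \<delta>" using d d1 p by (intro small_powr) auto
      have errC: "4*R*\<delta> powr p/p + real n * (4*(\<delta> powr p*\<eta> powr (-p))/p*\<eta>)
          + real n * (2*C_const p/p*((L+1) powr p*(2*\<delta>)/(\<kappa>/2))) \<le> e/4"
      proof -
        have "4*R*\<delta> powr p/p + real n * (4*(\<delta> powr p*\<eta> powr (-p))/p*\<eta>)
          + real n * (2*C_const p/p*((L+1) powr p*(2*\<delta>)/(\<kappa>/2)))
          = \<delta> powr p * (4*R/p + real n * (4*(\<eta> powr (-p))/p*\<eta>)) + \<delta> * (real n * (2*C_const p/p*((L+1) powr p*2/(\<kappa>/2))))"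
          by (simp add: field_simps)
        also have "\<dots> \<le> \<delta> * (4*R/p + real n * (4*(\<eta> powr (-p))/p*\<eta>)) + \<delta> * (real n * (2*C_const p/p*((L+1) powr p*2/(\<kappa>/2))))"
          using dp R p0 eta by (intro add_right_mono mult_right_mono) auto
        also have "\<dots> = \<delta> * M" by (simp add: M_def algebra_simps)
        also have "\<dots> \<le> e / (4 * (M + 1)) * M" using d M0 by (intro mult_right_mono) (auto simp: b2_def)
        also have "\<dots> \<le> e/4" using e M0 by (simp add: field_simps)
        finally show ?thesis .
      qed
      have "Lambda \<delta> p (S_floor \<delta> u) \<le> ennreal (4*R*\<delta> powr p/p
         + real n * (4*(\<delta> powr p*\<eta> powr (-p))/p*\<eta>)
         + real (card S) * (2*(\<rho>+2*\<eta>)/\<eta> + 1) * (4*L powr p*\<eta>/p)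
         + real n * (2*(2*\<kappa>) powr p/p*(2*\<eta>) + 2*C_const p/p*((L+1) powr p*(2*\<delta>)/(\<kappa>/2)))
         + 2*C_const p/p*((1+\<epsilon>)/(1-\<epsilon>)) powr (p+1) * Jr)"
        by (rule main_bound[OF p S der cu' cont Lb L1 supp R eta(1,2) A0_def cov(1,2) rho kap(1,2) eps uc d(1) d1])
           (use J Jr0 J_def in auto)
      also have "\<dots> \<le> ennreal (K * Jr + e)"
        using errA errB errC epsJ unfolding K_def by (intro ennreal_leI) (simp add: distrib_left)
      also have "\<dots> = ennreal (2 / p * C_const p) * J + ennreal e"
      proof -
        have k: "0 \<le> K * Jr" using K0 Jr0 by simp
        have "ennreal (K * Jr + e) = ennreal (K * Jr) + ennreal e" using k e by (simp add: ennreal_plus)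
        also have "ennreal (K * Jr) = ennreal (2 / p * C_const p) * J"
          unfolding J using K0 Jr0 by (simp add: K_def ennreal_mult[symmetric])
        finally show ?thesis .
      qed
      finally show "Lambda \<delta> p (S_floor \<delta> u) \<le> ennreal (2 / p * C_const p) * J + ennreal e" .
    qed
    then show "Limsup (at_right 0) (\<lambda>\<delta>. Lambda \<delta> p (S_floor \<delta> u)) \<le> ennreal (2 / p * C_const p) * J + ennreal e"
      by (rule Limsup_bounded)
  qed
qed

end
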